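(* Let $r\ge1$ and $\lambda^1,\dots,\lambda^r$ be partitions with all parts $\ge2$. In $\mathbb{C}[S_n]$, $$\prod_{j=1}^r\Sigma_{\lambda^j}=\Sigma_{\lambda^1\cup\dots\cup\lambda^r}+R,\qquad R=\sum_\mu r_\mu(n)\,\Sigma_\mu,$$ where $r_\mu(n)=O(n^\beta)$ as $n\to\infty$ with $\beta=\frac{l(\mu)+|\vec\lambda|+\ell(\vec\lambda)}{2}-|\mu|-1$, and $r_\mu(n)=0$ whenever either $l(\mu)>l(\vec\lambda)$, or $l(\mu)=l(\vec\lambda)$ and $\ell(\mu)\ge\ell(\vec\lambda)$.
   Context: For a partition $\lambda$ with parts $\ge2$ and $|\lambda|\le n$, $\Sigma_\lambda=\Sigma_{\lambda,n}=\sum(a_{1,1}\cdots a_{1,\lambda_1})\cdots(a_{\ell,1}\cdots a_{\ell,\lambda_\ell})$ over all choices of pairwise distinct $a_{p,q}\in\{1,\dots,n\}$ ($\Sigma_\emptyset=e$); these elements form a basis of the center of $\mathbb{C}[S_n]$, and the sum defining $R$ runs over partitions $\mu$ with parts $\ge2$. $|\lambda|$, $\ell(\lambda)$ are size and number of parts, $l(\lambda)=|\lambda|-\ell(\lambda)$; $|\vec\lambda|=\sum_j|\lambda^j|$, $\ell(\vec\lambda)=\sum_j\ell(\lambda^j)$, $l(\vec\lambda)=\sum_jl(\lambda^j)$; $\lambda^1\cup\dots\cup\lambda^r$ is the partition with the union of the multisets of parts. *)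

theory Defs
  imports "HOL-Analysis.Analysis" "HOL-Library.Multiset" "HOL-Library.Landau_Symbols"
    "HOL-Combinatorics.Cycles"
begin

text \<open>Partitions are finite multisets of natural numbers (their parts).
  We only use partitions all of whose parts are at least 2.\<close>

definition parts_ge2 :: "nat multiset \<Rightarrow> bool" where
  "parts_ge2 lam \<longleftrightarrow> (\<forall>k \<in># lam. 2 \<le> k)"

definition psize :: "nat multiset \<Rightarrow> nat" where
  "psize lam = sum_mset lam"

definition plen :: "nat multiset \<Rightarrow> nat" where
  "plen lam = size lam"

definition pl :: "nat multiset \<Rightarrow> nat" where
  "pl lam = psize lam - plen lam"

text \<open>Elements of the group algebra C[S_n]: complex-valued functions on
  maps nat => nat, meant to be supported on the permutations of {1..n}.\<close>

type_synonym galg = "(nat \<Rightarrow> nat) \<Rightarrow> complex"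

definition gunit :: galg where
  "gunit = (\<lambda>\<sigma>. if \<sigma> = id then 1 else 0)"

definition gmult :: "nat \<Rightarrow> galg \<Rightarrow> galg \<Rightarrow> galg" where
  "gmult n x y = (\<lambda>\<sigma>. \<Sum>\<tau> \<in> {\<tau>. \<tau> permutes {1..n}}. x \<tau> * y (inv \<tau> \<circ> \<sigma>))"

text \<open>Sigma_{lambda,n}: sum of products of disjoint cycles
  (a_{1,1} ... a_{1,lambda_1}) ... over pairwise distinct entries in {1..n}.
  A choice of the a_{p,q} is a list of lists whose lengths are the parts.\<close>

definition cycprod :: "nat list list \<Rightarrow> nat \<Rightarrow> nat" where
  "cycprod cs = foldr (\<lambda>c f. cycle_of_list c \<circ> f) cs id"

definition Sig :: "nat \<Rightarrow> nat multiset \<Rightarrow> galg" where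
  "Sig n lam = (\<lambda>\<sigma>. of_nat (card {cs :: nat list list.
       map length cs = sorted_list_of_multiset lam \<and> distinct (concat cs) \<and>
       set (concat cs) \<subseteq> {1..n} \<and> cycprod cs = \<sigma>}))"

definition gprod :: "nat \<Rightarrow> galg list \<Rightarrow> galg" where
  "gprod n xs = foldr (gmult n) xs gunit"

end

theory Submission
  imports Defs "HOL-Combinatorics.Orbits"
begin


lemma cycprod_Nil[simp]: "cycprod [] = id" by (simp add: cycprod_def)
lemma cycprod_Cons[simp]: "cycprod (c # cs) = cycle_of_list c \<circ> cycprod cs"
  by (simp add: cycprod_def)
lemma cycprod_append: "cycprod (xs @ ys) = cycprod xs \<circ> cycprod ys"
  by (induction xs) (auto simp: fun_eq_iff id_def)

lemma cycprod_permutes: "cycprod cs permutes set (concat cs)"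
proof (induction cs)
  case Nil then show ?case by (simp add: permutes_id id_def[symmetric])
next
  case (Cons c cs)
  have a: "cycle_of_list c permutes set (concat (c # cs))"
    by (rule permutes_subset[OF cycle_permutes]) auto
  have b: "cycprod cs permutes set (concat (c # cs))"
    by (rule permutes_subset[OF Cons.IH]) auto
  show ?case unfolding cycprod_Cons by (rule permutes_compose[OF b a])
qed

lemma cycprod_permutes_sub: "set (concat cs) \<subseteq> S \<Longrightarrow> cycprod cs permutes S"
  by (rule permutes_subset[OF cycprod_permutes])

lemma cycprod_outside: "x \<notin> set (concat cs) \<Longrightarrow> cycprod cs x = x"
  using cycprod_permutes permutes_not_in by fast

lemma cycle_of_list_in: "x \<in> set c \<Longrightarrow> cycle_of_list c x \<in> set c"
  by (metis cycle_permutes permutes_in_image)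

lemma cycprod_disj_on:
  assumes "distinct (concat cs)" "c \<in> set cs" "x \<in> set c"
  shows "cycprod cs x = cycle_of_list c x"
  using assms
proof (induction cs)
  case Nil then show ?case by simp
next
  case (Cons d cs)
  show ?case
  proof (cases "c = d")
    case True
    then have "x \<notin> set (concat cs)" using Cons.prems by auto
    then show ?thesis using True by (simp add: cycprod_outside)
  next
    case False
    then have c: "c \<in> set cs" using Cons.prems by auto
    have "cycprod cs x = cycle_of_list c x" using Cons c by auto
    moreover have "cycle_of_list c x \<in> set (concat cs)"
      using c Cons.prems(3) cycle_of_list_in by fastforce
    then have "cycle_of_list c x \<notin> set d" using Cons.prems(1) by auto
    ultimately show ?thesis by (simp add: id_outside_supp)
  qed
qed

lemma cycprod_conj:
  assumes "\<forall>c\<in>set cs. distinct c" "bij p"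
  shows "cycprod (map (map p) cs) = p \<circ> cycprod cs \<circ> inv p"
  using assms
proof (induction cs)
  case Nil then show ?case using bij_is_surj[OF assms(2)]
    by (auto simp: fun_eq_iff surj_f_inv_f)
next
  case (Cons c cs)
  have "cycprod (map (map p) (c # cs)) = (p \<circ> cycle_of_list c \<circ> inv p) \<circ> (p \<circ> cycprod cs \<circ> inv p)"
    using Cons conjugation_of_cycle[of c p] by (simp add: fun_eq_iff)
  also have "\<dots> = p \<circ> (cycle_of_list c \<circ> cycprod cs) \<circ> inv p"
    using bij_is_inj[OF assms(2)] by (auto simp: fun_eq_iff)
  finally show ?case by simp
qed

section \<open>Counting orbits\<close>

definition ncyc :: "'a set \<Rightarrow> ('a \<Rightarrow> 'a) \<Rightarrow> nat" where
  "ncyc S f = card (orbit f ` S)"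

lemma perm_of_permutes: "f permutes S \<Longrightarrow> finite S \<Longrightarrow> permutation f"
  using permutation_permutes by blast

lemma orb_eq: "permutation f \<Longrightarrow> y \<in> orbit f x \<Longrightarrow> orbit f y = orbit f x"
  by (metis cyclic_on_orbit' orbit_cyclic_eq3)

lemma orb_self: "permutation f \<Longrightarrow> x \<in> orbit f x"
  by (rule permutation_self_in_orbit)

lemma orb_closed:
  assumes "x \<in> A" "\<And>y. y \<in> A \<Longrightarrow> f y \<in> A" shows "orbit f x \<subseteq> A"
proof
  fix y assume "y \<in> orbit f x" then show "y \<in> A"
    by induct (use assms in auto)
qed

lemma ncyc_id: "ncyc S id = card S"
proof -
  have "orbit id ` S = (\<lambda>x. {x}) ` S"
    by (auto simp: orbit_eq_singleton_iff[THEN iffD2])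
  then show ?thesis unfolding ncyc_def by (simp add: card_image)
qed

lemma orbit_cong_outside:
  assumes f: "permutation f" and ab: "a \<notin> orbit f x" "b \<notin> orbit f x"
  shows "orbit (Transposition.transpose a b \<circ> f) x = orbit f x"
proof (rule orbit_cong[OF orb_self[OF f]])
  fix s assume "s \<in> orbit f x"
  then have "f s \<in> orbit f x" by (rule orbit.step)
  then have "f s \<noteq> a" "f s \<noteq> b" using ab by auto
  then show "(Transposition.transpose a b \<circ> f) s = f s" by simp
qed

lemma ncyc_transp_ge:
  assumes p: "f permutes S" and fin: "finite S" and a: "a \<in> S" and b: "b \<in> S"
  shows "ncyc S f \<le> ncyc S (Transposition.transpose a b \<circ> f) + 1"
proof -
  let ?g = "Transposition.transpose a b \<circ> f"
  have pf: "permutation f" using p fin perm_of_permutes by blast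
  have gp: "?g permutes S" by (rule permutes_compose[OF p permutes_swap_id[OF a b]])
  then have pg: "permutation ?g" using fin perm_of_permutes by blast
  define Q where "Q = orbit f ` S"
  define P where "P = orbit ?g ` S"
  define Q' where "Q' = Q - {orbit f a, orbit f b}"
  have sub: "insert (orbit ?g a) Q' \<subseteq> P"
  proof
    fix X assume X: "X \<in> insert (orbit ?g a) Q'"
    show "X \<in> P"
    proof (cases "X = orbit ?g a")
      case True then show ?thesis using a P_def by auto
    next
      case False
      then obtain x where x: "x \<in> S" "X = orbit f x" "X \<noteq> orbit f a" "X \<noteq> orbit f b"
        using X Q'_def Q_def by auto
      have "a \<notin> orbit f x" using x orb_eq[OF pf] by metis
      moreover have "b \<notin> orbit f x" using x orb_eq[OF pf] by metis
      ultimately have "orbit ?g x = X" using orbit_cong_outside[OF pf] x by simp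
      then show ?thesis using x P_def by auto
    qed
  qed
  have nin: "orbit ?g a \<notin> Q'"
  proof
    assume "orbit ?g a \<in> Q'"
    then obtain x where x: "orbit ?g a = orbit f x" "orbit f x \<noteq> orbit f a"
      using Q'_def Q_def by auto
    have "a \<in> orbit f x" using x orb_self[OF pg] by metis
    then show False using orb_eq[OF pf] x by metis
  qed
  have finQ: "finite Q" using fin Q_def by simp
  have finP: "finite P" using fin P_def by simp
  have "card Q - 2 \<le> card Q'"
  proof -
    have "Q \<subseteq> Q' \<union> {orbit f a, orbit f b}" unfolding Q'_def by auto
    then have "card Q \<le> card (Q' \<union> {orbit f a, orbit f b})"
      by (rule card_mono[rotated]) (use finQ Q'_def in auto)
    also have "\<dots> \<le> card Q' + card {orbit f a, orbit f b}" by (rule card_Un_le)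
    finally have "card Q \<le> card Q' + card {orbit f a, orbit f b}" .
    moreover have "card {orbit f a, orbit f b} \<le> 2" by (simp add: card_insert_le_m1)
    ultimately show ?thesis by linarith
  qed
  moreover have "card (insert (orbit ?g a) Q') = card Q' + 1"
    using nin finQ Q'_def by simp
  moreover have "card (insert (orbit ?g a) Q') \<le> card P"
    using card_mono[OF finP sub] .
  moreover have "card Q \<ge> 1"
  proof -
    have "Q \<noteq> {}" using a Q_def by auto
    then show ?thesis using finQ by (simp add: Suc_leI card_gt_0_iff)
  qed
  ultimately show ?thesis unfolding ncyc_def Q_def[symmetric] P_def[symmetric] by linarith
qed

lemma ncyc_transp_le:
  assumes p: "f permutes S" and fin: "finite S" and a: "a \<in> S" and b: "b \<in> S"
  shows "ncyc S (Transposition.transpose a b \<circ> f) \<le> ncyc S f + 1"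
proof -
  have gp: "Transposition.transpose a b \<circ> f permutes S" by (rule permutes_compose[OF p permutes_swap_id[OF a b]])
  have "Transposition.transpose a b \<circ> (Transposition.transpose a b \<circ> f) = f" by (simp add: comp_assoc[symmetric])
  then show ?thesis using ncyc_transp_ge[OF gp fin a b] by simp
qed

lemma ncyc_transp_merge:
  assumes p: "f permutes S" and fin: "finite S" and a: "a \<in> S" and b: "b \<in> S"
    and ab: "b \<notin> orbit f a"
  shows "ncyc S (Transposition.transpose a b \<circ> f) + 1 \<le> ncyc S f"
proof -
  define g where "g = Transposition.transpose a b \<circ> f"
  have pf: "permutation f" using p fin perm_of_permutes by blast
  have gp: "g permutes S" unfolding g_def by (rule permutes_compose[OF p permutes_swap_id[OF a b]])
  then have pg: "permutation g" using fin perm_of_permutes by blast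
  have geq: "g y = (if f y = a then b else if f y = b then a else f y)" for y
    unfolding g_def by (simp add: Transposition.transpose_def)
  define Oa where "Oa = orbit f a"
  define Ob where "Ob = orbit f b"
  define A where "A = orbit g a"
  have aOa: "a \<in> Oa" unfolding Oa_def by (rule orb_self[OF pf])
  have bOb: "b \<in> Ob" unfolding Ob_def by (rule orb_self[OF pf])
  have aA: "a \<in> A" unfolding A_def by (rule orb_self[OF pg])
  have Astep: "y \<in> A \<Longrightarrow> g y \<in> A" for y unfolding A_def by (rule orbit.step)
  have Oastep: "y \<in> Oa \<Longrightarrow> f y \<in> Oa" for y unfolding Oa_def by (rule orbit.step)
  have Obstep: "y \<in> Ob \<Longrightarrow> f y \<in> Ob" for y unfolding Ob_def by (rule orbit.step)
  have bOa: "b \<notin> Oa" using ab unfolding Oa_def .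
  have aOb: "a \<notin> Ob"
  proof
    assume "a \<in> Ob"
    then have "orbit f a = Ob" unfolding Ob_def by (rule orb_eq[OF pf])
    then show False using bOb bOa Oa_def by simp
  qed
  have OaA: "Oa \<subseteq> A"
  proof
    fix y assume "y \<in> Oa"
    then have "y \<in> orbit f a" unfolding Oa_def .
    then show "y \<in> A"
    proof induct
      case base
      have "f a \<in> Oa" using Oastep[OF aOa] .
      then have "f a \<noteq> b" using bOa by auto
      show ?case
      proof (cases "f a = a")
        case True then show ?thesis using aA by simp
      next
        case False
        then have "g a = f a" using geq \<open>f a \<noteq> b\<close> by simp
        then show ?thesis using Astep[OF aA] by simp
      qed
    next
      case (step y)
      have "f y \<in> Oa" using Oastep step(1) Oa_def by simp
      then have "f y \<noteq> b" using bOa by auto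
      show ?case
      proof (cases "f y = a")
        case True then show ?thesis using aA by simp
      next
        case False
        then have "g y = f y" using geq \<open>f y \<noteq> b\<close> by simp
        then show ?thesis using Astep[OF step(2)] by simp
      qed
    qed
  qed
  have bA: "b \<in> A"
  proof -
    have bij: "bij f" using pf permutation_bijective by blast
    then have fi: "f (inv f a) = a" by (simp add: bij_is_surj surj_f_inv_f)
    then have "a \<in> orbit f (inv f a)" by (metis orbit.base)
    then have "orbit f a = orbit f (inv f a)" by (rule orb_eq[OF pf])
    then have "inv f a \<in> Oa" using orb_self[OF pf, of "inv f a"] Oa_def by simp
    then have "inv f a \<in> A" using OaA by auto
    then have "g (inv f a) \<in> A" by (rule Astep)
    moreover have "g (inv f a) = b" using geq fi by simp
    ultimately show ?thesis by simp
  qed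
  have ObA: "Ob \<subseteq> A"
  proof
    fix y assume "y \<in> Ob"
    then have "y \<in> orbit f b" unfolding Ob_def .
    then show "y \<in> A"
    proof induct
      case base
      have "f b \<in> Ob" using Obstep[OF bOb] .
      then have "f b \<noteq> a" using aOb by auto
      show ?case
      proof (cases "f b = b")
        case True then show ?thesis using bA by simp
      next
        case False
        then have "g b = f b" using geq \<open>f b \<noteq> a\<close> by simp
        then show ?thesis using Astep[OF bA] by simp
      qed
    next
      case (step y)
      have "f y \<in> Ob" using Obstep step(1) Ob_def by simp
      then have "f y \<noteq> a" using aOb by auto
      show ?case
      proof (cases "f y = b")
        case True then show ?thesis using bA by simp
      next
        case False
        then have "g y = f y" using geq \<open>f y \<noteq> a\<close> by simp
        then show ?thesis using Astep[OF step(2)] by simp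
      qed
    qed
  qed
  have AU: "A \<subseteq> Oa \<union> Ob"
    unfolding A_def
  proof (rule orb_closed)
    show "a \<in> Oa \<union> Ob" using aOa by simp
  next
    fix y assume y: "y \<in> Oa \<union> Ob"
    then have "f y \<in> Oa \<union> Ob" using Oastep Obstep by blast
    then show "g y \<in> Oa \<union> Ob" using aOa bOb geq[of y] by simp
  qed
  have AE: "A = Oa \<union> Ob" using AU OaA ObA by blast
  define Q where "Q = orbit f ` S"
  have OaQ: "Oa \<in> Q" using a unfolding Q_def Oa_def by blast
  have ObQ: "Ob \<in> Q" using b unfolding Q_def Ob_def by blast
  have Oab: "Oa \<noteq> Ob" using aOa aOb by blast
  have "orbit g ` S \<subseteq> insert A (Q - {Oa, Ob})"
  proof
    fix X assume "X \<in> orbit g ` S"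
    then obtain x where x: "x \<in> S" "X = orbit g x" by blast
    show "X \<in> insert A (Q - {Oa, Ob})"
    proof (cases "x \<in> Oa \<union> Ob")
      case True
      then have "x \<in> A" using AE by simp
      then have "orbit g x = A" unfolding A_def by (rule orb_eq[OF pg])
      then show ?thesis using x by simp
    next
      case False
      have na: "a \<notin> orbit f x"
      proof
        assume "a \<in> orbit f x"
        then have "orbit f a = orbit f x" by (rule orb_eq[OF pf])
        then show False using False orb_self[OF pf, of x] Oa_def by simp
      qed
      have nb: "b \<notin> orbit f x"
      proof
        assume "b \<in> orbit f x"
        then have "orbit f b = orbit f x" by (rule orb_eq[OF pf])
        then show False using False orb_self[OF pf, of x] Ob_def by simp
      qed
      have "X = orbit f x" using orbit_cong_outside[OF pf na nb] x g_def by simp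
      moreover have "orbit f x \<noteq> Oa" "orbit f x \<noteq> Ob"
        using False orb_self[OF pf, of x] by auto
      moreover have "orbit f x \<in> Q" using x Q_def by blast
      ultimately show ?thesis by blast
    qed
  qed
  moreover have finQ: "finite Q" using fin Q_def by simp
  ultimately have "card (orbit g ` S) \<le> card (insert A (Q - {Oa, Ob}))"
    by (intro card_mono) auto
  also have "\<dots> \<le> card (Q - {Oa, Ob}) + 1" by (simp add: card_insert_le_m1 finQ)
  also have "card (Q - {Oa, Ob}) = card Q - 2"
    using OaQ ObQ Oab finQ by (simp add: card_Diff_subset)
  finally have "card (orbit g ` S) \<le> card Q - 2 + 1" .
  moreover have "card Q \<ge> 2"
  proof -
    have "{Oa, Ob} \<subseteq> Q" using OaQ ObQ by blast
    then have "card {Oa, Ob} \<le> card Q" using finQ card_mono by blast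
    then show ?thesis using Oab by simp
  qed
  ultimately show ?thesis unfolding ncyc_def Q_def g_def by linarith
qed


lemma ncyc_cycle_ge:
  assumes "f permutes S" "finite S" "set c \<subseteq> S"
  shows "ncyc S f \<le> ncyc S (cycle_of_list c \<circ> f) + (length c - 1)"
  using assms
proof (induction c arbitrary: f rule: cycle_of_list.induct)
  case (1 i j cs)
  define r where "r = cycle_of_list (j # cs) \<circ> f"
  have cp: "cycle_of_list (j # cs) permutes S"
    by (rule permutes_subset[OF cycle_permutes]) (use 1 in auto)
  have rp: "r permutes S" unfolding r_def by (rule permutes_compose[OF 1(2) cp])
  have ih: "ncyc S f \<le> ncyc S r + (length (j # cs) - 1)"
    unfolding r_def by (rule 1(1)[OF 1(2) 1(3)]) (use 1(4) in simp)
  have "ncyc S r \<le> ncyc S (Transposition.transpose i j \<circ> r) + 1"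
    by (rule ncyc_transp_ge[OF rp 1(3)]) (use 1 in auto)
  moreover have eq: "cycle_of_list (i # j # cs) \<circ> f = Transposition.transpose i j \<circ> r"
    unfolding r_def by (simp add: comp_assoc)
  moreover have "length (i # j # cs) - 1 = (length (j # cs) - 1) + 1" by simp
  ultimately show ?case using ih unfolding eq by linarith
qed auto

lemma arith_aux1: "(x1::nat) + 1 \<le> x2 \<Longrightarrow> x2 + 2*x3 \<le> x4 + x5 + 2*x6 \<Longrightarrow> x1 + 2*(x3+1) \<le> x4 + (x5+1) + 2*x6"
  by arith

lemma arith_aux2: "(x1::nat) + 2*x2 \<le> x3 + x4 + 2*x5 \<Longrightarrow> x3 + 2*x6 \<le> x7 + x8 + 2*x9
     \<Longrightarrow> x1 + 2*(x6 + x2) \<le> x7 + (x4 + x8) + 2*(x5 + x9)"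
  by arith

lemma ncyc_cycle_le:
  assumes "f permutes S" "finite S" "set c \<subseteq> S" "distinct c"
    and "\<And>x. x \<notin> V \<Longrightarrow> f x = x"
    and "(c \<noteq> [] \<and> last c \<in> V) \<or> set c \<inter> V = {}"
  shows "ncyc S (cycle_of_list c \<circ> f) + 2 * card (set c - V)
          \<le> ncyc S f + (length c - 1) + 2 * (if set c \<inter> V = {} then 1 else 0)"
  using assms
proof (induction c arbitrary: f rule: cycle_of_list.induct)
  case (1 i j cs)
  define r where "r = cycle_of_list (j # cs) \<circ> f"
  have cp: "cycle_of_list (j # cs) permutes S"
    by (rule permutes_subset[OF cycle_permutes]) (use 1 in auto)
  have rp: "r permutes S" unfolding r_def by (rule permutes_compose[OF 1(2) cp])
  have eq: "cycle_of_list (i # j # cs) \<circ> f = Transposition.transpose i j \<circ> r"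
    unfolding r_def by (simp add: comp_assoc)
  have iS: "i \<in> S" and jS: "j \<in> S" using 1 by auto
  have inot: "i \<notin> set (j # cs)" using 1(5) by simp
  have last_eq: "last (i # j # cs) = last (j # cs)" by simp
  have hyp: "(j # cs \<noteq> [] \<and> last (j # cs) \<in> V) \<or> set (j # cs) \<inter> V = {}"
  proof (cases "set (j # cs) \<inter> V = {}")
    case False
    then have "set (i # j # cs) \<inter> V \<noteq> {}" by auto
    then have "last (i # j # cs) \<in> V" using 1(7) by blast
    then show ?thesis using last_eq by simp
  qed simp
  have ih: "ncyc S r + 2 * card (set (j # cs) - V)
          \<le> ncyc S f + (length (j # cs) - 1) + 2 * (if set (j # cs) \<inter> V = {} then 1 else 0)"
    unfolding r_def by (rule 1(1)[OF 1(2) 1(3) _ _ 1(6) hyp]) (use 1(4,5) in auto)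
  show ?case
  proof (cases "i \<in> V")
    case False
    have "f i = i" using 1(6) False by simp
    moreover have "cycle_of_list (j # cs) i = i" using inot by (rule id_outside_supp)
    ultimately have "r i = i" unfolding r_def by simp
    then have "orbit r i = {i}" by (simp add: orbit_eq_singleton_iff)
    moreover have "j \<noteq> i" using 1(5) by auto
    ultimately have "j \<notin> orbit r i" by simp
    then have m: "ncyc S (Transposition.transpose i j \<circ> r) + 1 \<le> ncyc S r"
      by (rule ncyc_transp_merge[OF rp 1(3) iS jS])
    have c1: "card (set (i # j # cs) - V) = card (set (j # cs) - V) + 1"
    proof -
      have "set (i # j # cs) - V = insert i (set (j # cs) - V)" using False by auto
      then show ?thesis using inot by simp
    qed
    have c2: "(set (i # j # cs) \<inter> V = {}) = (set (j # cs) \<inter> V = {})" using False by auto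
    have l: "length (i # j # cs) - 1 = (length (j # cs) - 1) + 1" by simp
    have f: "(if set (i # j # cs) \<inter> V = {} then 1 else 0 :: nat) = (if set (j # cs) \<inter> V = {} then 1 else 0)"
      using c2 by simp
    show ?thesis unfolding eq c1 l f by (rule arith_aux1[OF m ih])
  next
    case True
    have ne: "set (i # j # cs) \<inter> V \<noteq> {}" using True by auto
    then have "last (i # j # cs) \<in> V" using 1(7) by blast
    then have "last (j # cs) \<in> V" using last_eq by simp
    then have ne2: "set (j # cs) \<inter> V \<noteq> {}" using last_in_set[of "j # cs"] by blast
    have c1: "card (set (i # j # cs) - V) = card (set (j # cs) - V)"
    proof -
      have "set (i # j # cs) - V = set (j # cs) - V" using True by auto
      then show ?thesis by simp
    qed
    have m: "ncyc S (Transposition.transpose i j \<circ> r) \<le> ncyc S r + 1"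
      by (rule ncyc_transp_le[OF rp 1(3) iS jS])
    have l: "length (i # j # cs) - 1 = (length (j # cs) - 1) + 1" by simp
    have f: "(if set (i # j # cs) \<inter> V = {} then 1 else 0 :: nat) = 0" using ne by simp
    have f2: "(if set (j # cs) \<inter> V = {} then 1 else 0 :: nat) = 0" using ne2 by simp
    show ?thesis unfolding eq c1 l f using m ih f2 by linarith
  qed
next
  case ("2_1" f) then show ?case by simp
next
  case ("2_2" v f) then show ?case by (cases "v \<in> V") (auto simp: insert_Diff_if)
qed

definition lsum :: "nat list list \<Rightarrow> nat" where
  "lsum C = sum_list (map (\<lambda>c. length c - 1) C)"

fun dcount :: "nat list list \<Rightarrow> nat" where
  "dcount [] = 0"
| "dcount (c # C) = (if set c \<inter> set (concat C) = {} then 1 else 0) + dcount C"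

lemma dcount_le: "dcount C \<le> length C"
  by (induction C) auto

lemma dcount_less:
  assumes "\<forall>c\<in>set C. distinct c" "\<not> distinct (concat C)"
  shows "dcount C < length C"
  using assms
proof (induction C)
  case Nil then show ?case by simp
next
  case (Cons c C)
  show ?case
  proof (cases "set c \<inter> set (concat C) = {}")
    case True
    then have "\<not> distinct (concat C)" using Cons.prems by auto
    then show ?thesis using Cons by simp
  next
    case False
    then show ?thesis using dcount_le[of C] by simp
  qed
qed

lemma ncyc_prod_ge:
  assumes "finite S" "set (concat C) \<subseteq> S"
  shows "card S \<le> ncyc S (cycprod C) + lsum C"
  using assms
proof (induction C)
  case Nil then show ?case by (simp add: ncyc_id[unfolded id_def] lsum_def)
next
  case (Cons c C)
  have p: "cycprod C permutes S" using Cons.prems by (intro cycprod_permutes_sub) auto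
  have "ncyc S (cycprod C) \<le> ncyc S (cycle_of_list c \<circ> cycprod C) + (length c - 1)"
    by (rule ncyc_cycle_ge[OF p Cons.prems(1)]) (use Cons.prems in auto)
  moreover have "lsum (c # C) = (length c - 1) + lsum C" by (simp add: lsum_def)
  moreover have "card S \<le> ncyc S (cycprod C) + lsum C" using Cons by auto
  ultimately show ?case unfolding cycprod_Cons by linarith
qed

lemma rotate_last:
  assumes "distinct c" "x \<in> set c"
  shows "\<exists>c'. set c' = set c \<and> length c' = length c \<and> distinct c'
     \<and> cycle_of_list c' = cycle_of_list c \<and> c' \<noteq> [] \<and> last c' = x"
proof -
  obtain xs ys where c: "c = xs @ x # ys" using split_list[OF assms(2)] by blast
  define c' where "c' = ys @ xs @ [x]"
  have "rotate (length (xs @ [x])) ((xs @ [x]) @ ys) = ys @ xs @ [x]"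
    by (rule rotate_append)
  then have r: "c' = rotate (length (xs @ [x])) c" using c c'_def by simp
  have e: "cycle_of_list c = cycle_of_list (rotate (length (xs @ [x])) c)"
    by (rule cycle_of_list_rotate_independent[OF assms(1)])
  have e2: "cycle_of_list c' = cycle_of_list c" using e r by (simp only:)
  have "set c' = set c" "length c' = length c" "distinct c'" "c' \<noteq> []" "last c' = x"
    using assms(1) unfolding c'_def c by auto
  then show ?thesis using e2 by blast
qed

lemma ncyc_prod_le:
  assumes "finite S" "set (concat C) \<subseteq> S" "\<forall>c\<in>set C. distinct c"
  shows "ncyc S (cycprod C) + 2 * card (set (concat C)) \<le> card S + lsum C + 2 * dcount C"
  using assms
proof (induction C)
  case Nil then show ?case by (simp add: ncyc_id[unfolded id_def] lsum_def)
next
  case (Cons c C)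
  define V where "V = set (concat C)"
  have p: "cycprod C permutes S" using Cons.prems by (intro cycprod_permutes_sub) auto
  have fixo: "\<And>x. x \<notin> V \<Longrightarrow> cycprod C x = x" unfolding V_def by (rule cycprod_outside)
  have dc: "distinct c" using Cons.prems by simp
  obtain c' where c': "set c' = set c" "length c' = length c" "distinct c'"
     "cycle_of_list c' = cycle_of_list c" "(c' \<noteq> [] \<and> last c' \<in> V) \<or> set c' \<inter> V = {}"
  proof (cases "set c \<inter> V = {}")
    case True then show ?thesis using that[of c] dc by simp
  next
    case False
    then obtain x where x: "x \<in> set c" "x \<in> V" by blast
    from rotate_last[OF dc x(1)] obtain c'' where "set c'' = set c \<and> length c'' = length c \<and> distinct c''
     \<and> cycle_of_list c'' = cycle_of_list c \<and> c'' \<noteq> [] \<and> last c'' = x" by blast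
    then show ?thesis using that[of c''] x by auto
  qed
  have st: "ncyc S (cycle_of_list c' \<circ> cycprod C) + 2 * card (set c' - V)
          \<le> ncyc S (cycprod C) + (length c' - 1) + 2 * (if set c' \<inter> V = {} then 1 else 0)"
    by (rule ncyc_cycle_le[OF p Cons.prems(1) _ c'(3) fixo c'(5)]) (use Cons.prems c'(1) in auto)
  have ih: "ncyc S (cycprod C) + 2 * card V \<le> card S + lsum C + 2 * dcount C"
    using Cons V_def by auto
  have cU: "card (set (concat (c # C))) = card V + card (set c - V)"
  proof -
    have e: "set (concat (c # C)) = V \<union> (set c - V)" unfolding V_def by auto
    have "card (V \<union> (set c - V)) = card V + card (set c - V)"
      by (rule card_Un_disjoint) (auto simp: V_def)
    then show ?thesis unfolding e .
  qed
  have l: "lsum (c # C) = (length c - 1) + lsum C" by (simp add: lsum_def)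
  have d: "dcount (c # C) = (if set c' \<inter> V = {} then 1 else 0) + dcount C"
    using c'(1) V_def by simp
  have cc: "card (set c' - V) = card (set c - V)" using c'(1) by simp
  show ?case unfolding cU l d cycprod_Cons c'(4)[symmetric] c'(2)[symmetric] cc[symmetric]
    by (rule arith_aux2[OF st ih])
qed


lemma orbit_cycle:
  assumes "distinct c" "x \<in> set c"
  shows "orbit (cycle_of_list c) x = set c"
proof -
  let ?f = "cycle_of_list c"
  obtain i where i: "i < length c" "c ! i = x" by (meson assms(2) in_set_conv_nth)
  have pw: "(?f ^^ n) x = c ! ((n + i) mod length c)" for n
  proof -
    have "map (?f ^^ n) c = rotate n c" by (rule cyclic_rotation[OF assms(1)])
    then have "map (?f ^^ n) c ! i = rotate n c ! i" by simp
    then show ?thesis using i nth_rotate[OF i(1), of n] by simp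
  qed
  have "orbit ?f x = {(?f ^^ n) x | n. True}" by (rule orbit_altdef_permutation[OF permutation_of_cycle])
  also have "\<dots> = set c"
  proof
    show "{(?f ^^ n) x | n. True} \<subseteq> set c"
    proof
      fix y assume "y \<in> {(?f ^^ n) x | n. True}"
      then obtain n where "y = (?f ^^ n) x" by blast
      moreover have "(n + i) mod length c < length c" by (rule mod_less_divisor) (use i(1) in linarith)
      ultimately show "y \<in> set c" using pw by simp
    qed
  next
    show "set c \<subseteq> {(?f ^^ n) x | n. True}"
    proof
      fix y assume "y \<in> set c"
      then obtain j where j: "j < length c" "c ! j = y" by (meson in_set_conv_nth)
      have "(j + length c - i + i) mod length c = j"
        using i(1) j(1) by simp
      then have "(?f ^^ (j + length c - i)) x = y" using pw j by simp
      then show "y \<in> {(?f ^^ n) x | n. True}" by blast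
    qed
  qed
  finally show ?thesis .
qed

lemma cycle_moves:
  assumes "distinct c" "2 \<le> length c" "x \<in> set c"
  shows "cycle_of_list c x \<noteq> x"
proof -
  obtain i where i: "i < length c" "c ! i = x" by (meson assms(3) in_set_conv_nth)
  have "map (cycle_of_list c ^^ 1) c = rotate 1 c" by (rule cyclic_rotation[OF assms(1)])
  then have "map (cycle_of_list c ^^ 1) c ! i = rotate 1 c ! i" by simp
  then have "cycle_of_list c x = c ! ((1 + i) mod length c)"
    using i nth_rotate[OF i(1), of 1] by simp
  moreover have "(1 + i) mod length c \<noteq> i"
  proof (cases "i + 1 < length c")
    case True then show ?thesis by simp
  next
    case False
    then have "i + 1 = length c" using i by simp
    then show ?thesis using assms(2) by simp
  qed
  moreover have "(1 + i) mod length c < length c" by (rule mod_less_divisor) (use i(1) in linarith)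
  ultimately show ?thesis using i nth_eq_iff_index_eq[OF assms(1)] by metis
qed

lemma perm_cycprod: "permutation (cycprod C)"
  using cycprod_permutes perm_of_permutes by blast

lemma orbit_cycprod_in:
  assumes "distinct (concat C)" "c \<in> set C" "x \<in> set c"
  shows "orbit (cycprod C) x = set c"
proof -
  have dc: "distinct c" using assms(1,2) by (metis distinct_concat_iff)
  have "orbit (cycprod C) x = orbit (cycle_of_list c) x"
  proof (rule orbit_cong0[OF assms(3)])
    show "cycprod C \<in> set c \<rightarrow> set c"
      using cycprod_disj_on[OF assms(1,2)] cycle_of_list_in by auto
    show "\<And>y. y \<in> set c \<Longrightarrow> cycprod C y = cycle_of_list c y"
      using cycprod_disj_on[OF assms(1,2)] by auto
  qed
  then show ?thesis using orbit_cycle[OF dc assms(3)] by simp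
qed

lemma orbit_cycprod_out:
  assumes "x \<notin> set (concat C)"
  shows "orbit (cycprod C) x = {x}"
  using cycprod_outside[OF assms] by (simp add: orbit_eq_singleton_iff)

lemma distinct_map_set:
  assumes "distinct (concat C)" "\<forall>c\<in>set C. c \<noteq> []"
  shows "distinct (map set C)"
  using assms
proof (induction C)
  case (Cons c C)
  have "set c \<notin> set (map set C)"
  proof
    assume "set c \<in> set (map set C)"
    then obtain d where "d \<in> set C" "set d = set c" by auto
    moreover have "set c \<inter> set (concat C) = {}" using Cons.prems(1) by simp
    moreover have "set c \<noteq> {}" using Cons.prems(2) by simp
    moreover obtain y where "y \<in> set c" using Cons.prems(2) by (metis last_in_set list.set_intros(1))
    ultimately show False by auto
  qed
  then show ?case using Cons by simp
qed simp

lemma ncyc_disj: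
  assumes "distinct (concat C)" "\<forall>c\<in>set C. c \<noteq> []" "set (concat C) \<subseteq> S" "finite S"
  shows "ncyc S (cycprod C) = length C + card (S - set (concat C))"
proof -
  let ?U = "set (concat C)"
  have "orbit (cycprod C) ` S = set (map set C) \<union> (\<lambda>x. {x}) ` (S - ?U)"
  proof (intro equalityI subsetI)
    fix X assume "X \<in> orbit (cycprod C) ` S"
    then obtain x where x: "x \<in> S" "X = orbit (cycprod C) x" by blast
    show "X \<in> set (map set C) \<union> (\<lambda>x. {x}) ` (S - ?U)"
    proof (cases "x \<in> ?U")
      case True
      then obtain c where "c \<in> set C" "x \<in> set c" by auto
      then show ?thesis using x orbit_cycprod_in[OF assms(1)] by auto
    next
      case False then show ?thesis using x orbit_cycprod_out by auto
    qed
  next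
    fix X assume "X \<in> set (map set C) \<union> (\<lambda>x. {x}) ` (S - ?U)"
    then show "X \<in> orbit (cycprod C) ` S"
    proof
      assume "X \<in> set (map set C)"
      then obtain c where c: "c \<in> set C" "X = set c" by auto
      then obtain x where "x \<in> set c" using assms(2) by (metis last_in_set)
      moreover have "x \<in> S" using c(1) \<open>x \<in> set c\<close> assms(3) by auto
      ultimately show ?thesis using c orbit_cycprod_in[OF assms(1) c(1)] by auto
    next
      assume "X \<in> (\<lambda>x. {x}) ` (S - ?U)"
      then show ?thesis using orbit_cycprod_out by auto
    qed
  qed
  moreover have "set (map set C) \<inter> (\<lambda>x. {x}) ` (S - ?U) = {}"
  proof -
    { fix c x assume "c \<in> set C" "x \<in> S - ?U" "set c = {x}"
      then have False by auto }
    then show ?thesis by auto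
  qed
  moreover have "card (set (map set C)) = length C"
    using distinct_card[OF distinct_map_set[OF assms(1,2)]] by simp
  moreover have "card ((\<lambda>x. {x}) ` (S - ?U)) = card (S - ?U)"
    by (simp add: card_image)
  ultimately show ?thesis unfolding ncyc_def using assms(4)
    by (simp add: card_Un_disjoint)
qed

lemma shape_orbits:
  assumes "distinct (concat C)" "\<forall>c\<in>set C. 2 \<le> length c"
  shows "set (map set C) = {orbit (cycprod C) x | x. cycprod C x \<noteq> x}"
proof (intro equalityI subsetI)
  fix X assume "X \<in> set (map set C)"
  then obtain c where c: "c \<in> set C" "X = set c" by auto
  then have "c \<noteq> []" using assms(2) by fastforce
  then obtain x where x: "x \<in> set c" by (metis last_in_set)
  have dc: "distinct c" using assms(1) c(1) by (metis distinct_concat_iff)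
  have "cycprod C x = cycle_of_list c x" by (rule cycprod_disj_on[OF assms(1) c(1) x])
  also have "\<dots> \<noteq> x" using cycle_moves[OF dc _ x] assms(2) c(1) by auto
  finally show "X \<in> {orbit (cycprod C) x | x. cycprod C x \<noteq> x}"
    using orbit_cycprod_in[OF assms(1) c(1) x] c(2) by auto
next
  fix X assume "X \<in> {orbit (cycprod C) x | x. cycprod C x \<noteq> x}"
  then obtain x where x: "X = orbit (cycprod C) x" "cycprod C x \<noteq> x" by auto
  then have "x \<in> set (concat C)" using cycprod_outside by metis
  then obtain c where "c \<in> set C" "x \<in> set c" by auto
  then show "X \<in> set (map set C)" using orbit_cycprod_in[OF assms(1)] x by auto
qed

lemma shape_unique:
  assumes "distinct (concat C)" "\<forall>c\<in>set C. 2 \<le> length c"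
    and "distinct (concat D)" "\<forall>c\<in>set D. 2 \<le> length c"
    and "cycprod C = cycprod D"
  shows "mset (map length C) = mset (map length D)"
proof -
  have ne: "\<forall>c\<in>set C. c \<noteq> []" "\<forall>c\<in>set D. c \<noteq> []" using assms(2,4) by fastforce+
  have "set (map set C) = set (map set D)"
    using shape_orbits[OF assms(1,2)] shape_orbits[OF assms(3,4)] assms(5) by simp
  then have "mset (map set C) = mset (map set D)"
    using mset_set_set[OF distinct_map_set[OF assms(1) ne(1)]]
          mset_set_set[OF distinct_map_set[OF assms(3) ne(2)]] by metis
  then have "image_mset card (mset (map set C)) = image_mset card (mset (map set D))" by simp
  moreover have "map length C = map card (map set C)"
    using assms(1) by (auto simp: distinct_card distinct_concat_iff)
  moreover have "map length D = map card (map set D)"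
    using assms(3) by (auto simp: distinct_card distinct_concat_iff)
  ultimately show ?thesis by (metis mset_map)
qed


definition valid :: "nat \<Rightarrow> nat list list \<Rightarrow> nat multiset \<Rightarrow> bool" where
  "valid n cs lam \<longleftrightarrow> map length cs = sorted_list_of_multiset lam \<and> distinct (concat cs) \<and> set (concat cs) \<subseteq> {1..n}"

definition Tup :: "nat \<Rightarrow> nat multiset list \<Rightarrow> nat list list list set" where
  "Tup n lams = {tup. list_all2 (valid n) tup lams}"

lemma Sig_valid: "Sig n lam \<sigma> = of_nat (card {cs. valid n cs lam \<and> cycprod cs = \<sigma>})"
  unfolding Sig_def valid_def by (simp add: conj_assoc)

lemma finite_shape:
  "finite {C :: nat list list. length C = k \<and> distinct (concat C) \<and> set (concat C) \<subseteq> {1..n}}"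
proof -
  let ?A = "{c :: nat list. set c \<subseteq> {1..n} \<and> length c \<le> n}"
  have fA: "finite ?A" by (rule finite_lists_length_le) simp
  have "{C :: nat list list. length C = k \<and> distinct (concat C) \<and> set (concat C) \<subseteq> {1..n}}
        \<subseteq> {C. set C \<subseteq> ?A \<and> length C = k}"
  proof clarify
    fix C :: "nat list list"
    assume a: "distinct (concat C)" "set (concat C) \<subseteq> {1..n}" "k = length C"
    have "length (concat C) \<le> n"
    proof -
      have "length (concat C) = card (set (concat C))" by (rule distinct_card[OF a(1), symmetric])
      also have "\<dots> \<le> card {1..n}" by (rule card_mono) (use a(2) in auto)
      finally show ?thesis by simp
    qed
    moreover have "\<forall>c\<in>set C. length c \<le> length (concat C)"
      by (induction C) auto
    ultimately have "\<forall>c\<in>set C. length c \<le> n" by fastforce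
    moreover have "\<forall>c\<in>set C. set c \<subseteq> {1..n}" using a(2) by auto
    ultimately show "set C \<subseteq> ?A \<and> length C = length C" by auto
  qed
  moreover have "finite {C. set C \<subseteq> ?A \<and> length C = k}" by (rule finite_lists_length_eq[OF fA])
  ultimately show ?thesis by (rule finite_subset)
qed

lemma finite_valid: "finite {cs. valid n cs lam}"
proof -
  have "{cs. valid n cs lam} \<subseteq> {C :: nat list list. length C = size lam \<and> distinct (concat C) \<and> set (concat C) \<subseteq> {1..n}}"
    unfolding valid_def by (auto dest!: arg_cong[where f=length] simp del: length_map simp: length_map[symmetric])
      (metis length_map mset_sorted_list_of_multiset size_mset)
  then show ?thesis using finite_shape finite_subset by blast
qed

lemma Tup_Nil: "Tup n [] = {[]}"
  unfolding Tup_def by auto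

lemma Tup_Cons: "Tup n (lam # lams) = (\<lambda>(cs, tup). cs # tup) ` ({cs. valid n cs lam} \<times> Tup n lams)"
  unfolding Tup_def by (auto simp: list_all2_Cons2)

lemma finite_Tup: "finite (Tup n lams)"
  by (induction lams) (auto simp: Tup_Nil Tup_Cons finite_valid)

lemma valid_permutes:
  assumes "valid n cs lam" shows "cycprod cs permutes {1..n}"
  by (rule cycprod_permutes_sub) (use assms[unfolded valid_def] in blast)

definition G :: "nat \<Rightarrow> nat multiset list \<Rightarrow> (nat \<Rightarrow> nat) \<Rightarrow> complex" where
  "G n lams \<sigma> = (\<Sum>tup\<in>Tup n lams. if cycprod (concat tup) = \<sigma> then 1 else 0)"

lemma of_nat_card_filter:
  assumes "finite A"
  shows "(of_nat (card {x\<in>A. P x}) :: complex) = (\<Sum>x\<in>A. if P x then 1 else 0)"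
proof -
  have "(of_nat (card {x\<in>A. P x}) :: complex) = (\<Sum>x\<in>{x\<in>A. P x}. 1)" by simp
  also have "\<dots> = (\<Sum>x\<in>A. if P x then 1 else 0)" by (rule sum.inter_filter[OF assms])
  finally show ?thesis .
qed

lemma of_nat_card_filter':
  assumes "finite {x. Q x}"
  shows "(of_nat (card {x. Q x \<and> P x}) :: complex) = (\<Sum>x\<in>{x. Q x}. if P x then 1 else 0)"
  using of_nat_card_filter[OF assms, of P] by simp

lemma gprod_G: "gprod n (map (Sig n) lams) = G n lams"
proof (induction lams)
  case Nil
  show ?case unfolding gprod_def G_def Tup_Nil gunit_def by (auto simp: fun_eq_iff)
next
  case (Cons lam lams)
  let ?P = "{\<tau>. \<tau> permutes {1..n}}"
  let ?V = "{cs. valid n cs lam}"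
  have fP: "finite ?P" by (rule finite_permutations) simp
  have fV: "finite ?V" by (rule finite_valid)
  have fT: "finite (Tup n lams)" by (rule finite_Tup)
  show ?case
  proof
    fix \<sigma>
    have "gprod n (map (Sig n) (lam # lams)) \<sigma> = gmult n (Sig n lam) (G n lams) \<sigma>"
      using Cons by (simp add: gprod_def)
    also have "\<dots> = (\<Sum>\<tau>\<in>?P. (\<Sum>cs\<in>?V. if cycprod cs = \<tau> then 1 else 0) * G n lams (inv \<tau> \<circ> \<sigma>))"
      unfolding gmult_def Sig_valid
      by (intro sum.cong refl) (simp only: of_nat_card_filter'[OF fV])
    also have "\<dots> = (\<Sum>\<tau>\<in>?P. \<Sum>cs\<in>?V. if \<tau> = cycprod cs then G n lams (inv \<tau> \<circ> \<sigma>) else 0)"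
      by (intro sum.cong refl) (auto simp: sum_distrib_right intro!: sum.cong)
    also have "\<dots> = (\<Sum>cs\<in>?V. \<Sum>\<tau>\<in>?P. if \<tau> = cycprod cs then G n lams (inv \<tau> \<circ> \<sigma>) else 0)"
      by (rule sum.swap)
    also have "\<dots> = (\<Sum>cs\<in>?V. G n lams (inv (cycprod cs) \<circ> \<sigma>))"
      using fP valid_permutes by (intro sum.cong refl) auto
    also have "\<dots> = (\<Sum>cs\<in>?V. \<Sum>tup\<in>Tup n lams. if cycprod cs \<circ> cycprod (concat tup) = \<sigma> then 1 else 0)"
    proof (intro sum.cong refl)
      fix cs assume "cs \<in> ?V"
      then have b: "bij (cycprod cs)" using valid_permutes permutes_bij by blast
      have "\<And>r. (r = inv (cycprod cs) \<circ> \<sigma>) = (cycprod cs \<circ> r = \<sigma>)"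
      proof
        fix r assume "r = inv (cycprod cs) \<circ> \<sigma>"
        then show "cycprod cs \<circ> r = \<sigma>" using b by (simp add: fun_eq_iff bij_is_surj surj_f_inv_f)
      next
        fix r assume "cycprod cs \<circ> r = \<sigma>"
        then show "r = inv (cycprod cs) \<circ> \<sigma>" using b
          by (metis bij_is_inj comp_assoc fun.map_id inv_o_cancel)
      qed
      then show "G n lams (inv (cycprod cs) \<circ> \<sigma>) = (\<Sum>tup\<in>Tup n lams. if cycprod cs \<circ> cycprod (concat tup) = \<sigma> then 1 else 0)"
        unfolding G_def by simp
    qed
    also have "\<dots> = (\<Sum>p\<in>?V \<times> Tup n lams. if cycprod (concat ((\<lambda>(cs, tup). cs # tup) p)) = \<sigma> then 1 else 0)"
      by (subst sum.cartesian_product) (auto simp: cycprod_append intro!: sum.cong)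
    also have "\<dots> = G n (lam # lams) \<sigma>"
      unfolding G_def Tup_Cons
      by (rule sum.reindex[symmetric, unfolded comp_def]) (auto simp: inj_on_def)
    finally show "gprod n (map (Sig n) (lam # lams)) \<sigma> = G n (lam # lams) \<sigma>" .
  qed
qed

definition Tcnt :: "nat \<Rightarrow> nat multiset list \<Rightarrow> (nat \<Rightarrow> nat) \<Rightarrow> nat" where
  "Tcnt n lams \<sigma> = card {tup \<in> Tup n lams. cycprod (concat tup) = \<sigma>}"

lemma gprod_Tcnt: "gprod n (map (Sig n) lams) \<sigma> = of_nat (Tcnt n lams \<sigma>)"
  unfolding gprod_G G_def Tcnt_def by (simp add: of_nat_card_filter[OF finite_Tup])


definition Cset :: "nat \<Rightarrow> nat list \<Rightarrow> (nat \<Rightarrow> nat) \<Rightarrow> nat list list set" where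
  "Cset n ws \<sigma> = {C. map length C = ws \<and> distinct (concat C) \<and> set (concat C) \<subseteq> {1..n} \<and> cycprod C = \<sigma>}"

definition Cnt :: "nat \<Rightarrow> nat list \<Rightarrow> (nat \<Rightarrow> nat) \<Rightarrow> nat" where
  "Cnt n ws \<sigma> = card (Cset n ws \<sigma>)"

lemma finite_Cset: "finite (Cset n ws \<sigma>)"
proof -
  have "Cset n ws \<sigma> \<subseteq> {C :: nat list list. length C = length ws \<and> distinct (concat C) \<and> set (concat C) \<subseteq> {1..n}}"
    unfolding Cset_def by (auto dest: arg_cong[where f=length])
  then show ?thesis using finite_shape finite_subset by blast
qed

lemma Sig_Cnt: "Sig n lam \<sigma> = of_nat (Cnt n (sorted_list_of_multiset lam) \<sigma>)"
  unfolding Sig_def Cnt_def Cset_def by (simp add: conj_assoc)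

lemma mset_concat_permute:
  assumes "p permutes {..<length C}"
  shows "mset (concat (permute_list p C)) = mset (concat C)"
proof -
  have "mset (concat xs) = sum_mset (image_mset mset (mset xs))" for xs :: "'a list list"
    by (induction xs) auto
  then show ?thesis using assms by simp
qed

lemma cycprod_permute:
  assumes d: "distinct (concat C)" and p: "p permutes {..<length C}"
  shows "cycprod (permute_list p C) = cycprod C"
proof
  fix x
  let ?C = "permute_list p C"
  have m: "mset (concat ?C) = mset (concat C)" by (rule mset_concat_permute[OF p])
  have d': "distinct (concat ?C)" using d mset_eq_imp_distinct_iff[OF m] by simp
  have s: "set ?C = set C" using p by simp
  have s2: "set (concat ?C) = set (concat C)" using m mset_eq_setD by blast
  show "cycprod ?C x = cycprod C x"
  proof (cases "x \<in> set (concat C)")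
    case True
    then obtain c where c: "c \<in> set C" "x \<in> set c" by auto
    have c': "c \<in> set ?C" using c s by simp
    show ?thesis using cycprod_disj_on[OF d c] cycprod_disj_on[OF d' c' c(2)] by simp
  next
    case False
    have a: "x \<notin> set (concat ?C)" using False s2 by blast
    show ?thesis using cycprod_outside[OF False] cycprod_outside[OF a] by simp
  qed
qed

lemma permute_list_inj:
  assumes p: "p permutes {..<n}" and l: "length A = n" "length B = n"
    and e: "permute_list p A = permute_list p B"
  shows "A = B"
proof (rule nth_equalityI)
  show "length A = length B" using l by simp
  fix i assume i: "i < length A"
  then have "i \<in> p ` {..<n}" using p l permutes_image by fastforce
  then obtain j where j: "j < n" "i = p j" by auto
  have "permute_list p A ! j = permute_list p B ! j" using e by simp
  then show "A ! i = B ! i" using j l p by (simp add: permute_list_nth)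
qed

lemma Cnt_perm_le:
  assumes "mset ws = mset ws'"
  shows "Cnt n ws' \<sigma> \<le> Cnt n ws \<sigma>"
proof -
  obtain p where p: "p permutes {..<length ws'}" "permute_list p ws' = ws"
    using mset_eq_permutation[OF assms] by blast
  show ?thesis unfolding Cnt_def
  proof (rule card_inj_on_le[OF _ _ finite_Cset])
    show "inj_on (permute_list p) (Cset n ws' \<sigma>)"
    proof (rule inj_onI)
      fix A B assume A: "A \<in> Cset n ws' \<sigma>" and B: "B \<in> Cset n ws' \<sigma>"
        and e: "permute_list p A = permute_list p B"
      have "length A = length ws'" "length B = length ws'"
        using A B unfolding Cset_def by (auto dest: arg_cong[where f=length])
      then show "A = B" using permute_list_inj[OF p(1) _ _ e] by simp
    qed
  next
    show "permute_list p ` Cset n ws' \<sigma> \<subseteq> Cset n ws \<sigma>"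
    proof
      fix D assume "D \<in> permute_list p ` Cset n ws' \<sigma>"
      then obtain C where C: "C \<in> Cset n ws' \<sigma>" "D = permute_list p C" by blast
      have lC: "length C = length ws'" using C(1) unfolding Cset_def by (auto dest: arg_cong[where f=length])
      have pC: "p permutes {..<length C}" using p(1) lC by simp
      have m: "mset (concat D) = mset (concat C)" using mset_concat_permute[OF pC] C(2) by simp
      have "map length D = permute_list p (map length C)" using permute_list_map[OF pC, of length] C(2) by simp
      also have "\<dots> = ws" using C(1) p(2) unfolding Cset_def by simp
      finally have "map length D = ws" .
      moreover have "distinct (concat D)" using C(1) mset_eq_imp_distinct_iff[OF m] unfolding Cset_def by simp
      moreover have "set (concat D) \<subseteq> {1..n}" using C(1) mset_eq_setD[OF m] unfolding Cset_def by simp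
      moreover have "cycprod D = \<sigma>" using C cycprod_permute[OF _ pC] unfolding Cset_def by simp
      ultimately show "D \<in> Cset n ws \<sigma>" unfolding Cset_def by simp
    qed
  qed
qed

lemma Cnt_perm: "mset ws = mset ws' \<Longrightarrow> Cnt n ws \<sigma> = Cnt n ws' \<sigma>"
  using Cnt_perm_le[of ws ws' n \<sigma>] Cnt_perm_le[of ws' ws n \<sigma>] by simp

lemma concat_split:
  "map length C = concat wss \<Longrightarrow> \<exists>tup. map (map length) tup = wss \<and> concat tup = C"
proof (induction wss arbitrary: C)
  case Nil then show ?case by simp
next
  case (Cons ws wss)
  let ?k = "length ws"
  have "map length (take ?k C) = ws" using Cons.prems by (simp add: take_map[symmetric])
  moreover have "map length (drop ?k C) = concat wss" using Cons.prems by (simp add: drop_map[symmetric])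
  then obtain tup where "map (map length) tup = wss" "concat tup = drop ?k C" using Cons.IH by blast
  ultimately show ?case by (intro exI[of _ "take ?k C # tup"]) simp
qed

lemma concat_inj:
  "map length xs = map length ys \<Longrightarrow> concat xs = concat ys \<Longrightarrow> xs = ys"
proof (induction xs arbitrary: ys)
  case Nil then show ?case by simp
next
  case (Cons x xs)
  then obtain y ys' where y: "ys = y # ys'" by (cases ys) auto
  then have "length x = length y" using Cons.prems by simp
  then have "x = y" "concat xs = concat ys'" using Cons.prems y by (auto simp: append_eq_append_conv)
  then show ?case using Cons y by simp
qed

lemma Tup_shape: "tup \<in> Tup n lams \<Longrightarrow> map (map length) tup = map sorted_list_of_multiset lams"
  unfolding Tup_def mem_Collect_eq
  by (induction tup lams rule: list_all2_induct) (auto simp: valid_def)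

lemma Tup_set: "tup \<in> Tup n lams \<Longrightarrow> set (concat (concat tup)) \<subseteq> {1..n}"
  unfolding Tup_def mem_Collect_eq
  by (induction tup lams rule: list_all2_induct) (auto simp: valid_def)

lemma Tup_cyc_distinct: "tup \<in> Tup n lams \<Longrightarrow> \<forall>c\<in>set (concat tup). distinct c"
  unfolding Tup_def mem_Collect_eq
  by (induction tup lams rule: list_all2_induct) (auto simp: valid_def distinct_concat_iff)

lemma Tup_mem: "tup \<in> Tup n lams \<longleftrightarrow> list_all2 (valid n) tup lams"
  unfolding Tup_def by simp

lemma Tup_distinct:
  "(tup \<in> Tup n lams \<and> distinct (concat (concat tup))) \<longleftrightarrow>
   (map (map length) tup = map sorted_list_of_multiset lams \<and> distinct (concat (concat tup))
     \<and> set (concat (concat tup)) \<subseteq> {1..n})"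
  unfolding Tup_mem
proof (induction lams arbitrary: tup)
  case Nil then show ?case by auto
next
  case (Cons lam lams)
  note IH = Cons.IH
  show ?case
  proof (cases tup)
    case Nil then show ?thesis by simp
  next
    case (Cons cs tup')
    have e1: "distinct (concat (concat (cs # tup'))) \<longleftrightarrow> distinct (concat cs) \<and> distinct (concat (concat tup')) \<and> set (concat cs) \<inter> set (concat (concat tup')) = {}"
      by simp
    have e2: "set (concat (concat (cs # tup'))) \<subseteq> {1..n} \<longleftrightarrow> set (concat cs) \<subseteq> {1..n} \<and> set (concat (concat tup')) \<subseteq> {1..n}"
      by simp
    have e3: "list_all2 (valid n) (cs # tup') (lam # lams) \<longleftrightarrow> valid n cs lam \<and> list_all2 (valid n) tup' lams"
      by simp
    have e4: "map (map length) (cs # tup') = map sorted_list_of_multiset (lam # lams) \<longleftrightarrow>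
        map length cs = sorted_list_of_multiset lam \<and> map (map length) tup' = map sorted_list_of_multiset lams"
      by simp
    have ih: "list_all2 (valid n) tup' lams \<and> distinct (concat (concat tup')) \<longleftrightarrow>
      map (map length) tup' = map sorted_list_of_multiset lams \<and> distinct (concat (concat tup')) \<and> set (concat (concat tup')) \<subseteq> {1..n}"
      by (rule IH)
    have v: "valid n cs lam \<longleftrightarrow> map length cs = sorted_list_of_multiset lam \<and> distinct (concat cs) \<and> set (concat cs) \<subseteq> {1..n}"
      by (simp add: valid_def)
    show ?thesis unfolding Cons e1 e2 e3 e4 using ih v by (smt (verit))
  qed
qed

definition Dset where
  "Dset n lams \<sigma> = {tup \<in> Tup n lams. distinct (concat (concat tup)) \<and> cycprod (concat tup) = \<sigma>}"
definition Oset where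
  "Oset n lams \<sigma> = {tup \<in> Tup n lams. \<not> distinct (concat (concat tup)) \<and> cycprod (concat tup) = \<sigma>}"

lemma Tcnt_split: "Tcnt n lams \<sigma> = card (Dset n lams \<sigma>) + card (Oset n lams \<sigma>)"
proof -
  have "{tup \<in> Tup n lams. cycprod (concat tup) = \<sigma>} = Dset n lams \<sigma> \<union> Oset n lams \<sigma>"
    unfolding Dset_def Oset_def by auto
  moreover have "Dset n lams \<sigma> \<inter> Oset n lams \<sigma> = {}" unfolding Dset_def Oset_def by auto
  moreover have "finite (Dset n lams \<sigma>)" "finite (Oset n lams \<sigma>)"
    unfolding Dset_def Oset_def using finite_Tup by auto
  ultimately show ?thesis unfolding Tcnt_def by (simp add: card_Un_disjoint)
qed

lemma Dset_card: "card (Dset n lams \<sigma>) = Cnt n (concat (map sorted_list_of_multiset lams)) \<sigma>"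
proof -
  have inj: "inj_on concat (Dset n lams \<sigma>)"
  proof (rule inj_onI)
    fix a b assume a: "a \<in> Dset n lams \<sigma>" and b: "b \<in> Dset n lams \<sigma>" and e: "concat a = concat b"
    have "map (map length) a = map (map length) b" using a b Tup_shape unfolding Dset_def by auto
    then have "map length (map (map length) a) = map length (map (map length) b)" by simp
    then have "map length a = map length b" by (simp add: comp_def)
    then show "a = b" by (rule concat_inj[OF _ e])
  qed
  have img: "concat ` Dset n lams \<sigma> = Cset n (concat (map sorted_list_of_multiset lams)) \<sigma>"
  proof (intro equalityI subsetI)
    fix C assume "C \<in> concat ` Dset n lams \<sigma>"
    then obtain tup where t: "tup \<in> Dset n lams \<sigma>" "C = concat tup" by blast
    have "map length C = concat (map sorted_list_of_multiset lams)"
      using t Tup_shape[of tup n lams] unfolding Dset_def by (simp add: map_concat)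
    then show "C \<in> Cset n (concat (map sorted_list_of_multiset lams)) \<sigma>"
      using t Tup_set[of tup n lams] unfolding Dset_def Cset_def by auto
  next
    fix C assume C: "C \<in> Cset n (concat (map sorted_list_of_multiset lams)) \<sigma>"
    then obtain tup where t: "map (map length) tup = map sorted_list_of_multiset lams" "concat tup = C"
      using concat_split unfolding Cset_def by blast
    have d: "distinct (concat (concat tup))" "set (concat (concat tup)) \<subseteq> {1..n}"
      using t(2) C unfolding Cset_def by auto
    have "tup \<in> Tup n lams \<and> distinct (concat (concat tup))"
      by (rule Tup_distinct[THEN iffD2]) (use t(1) d in blast)
    then have "tup \<in> Dset n lams \<sigma>" using t C unfolding Dset_def Cset_def by auto
    then show "C \<in> concat ` Dset n lams \<sigma>" using t by blast
  qed
  show ?thesis unfolding Cnt_def img[symmetric] using card_image[OF inj] by simp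
qed

lemma mset_concat_sorted: "mset (concat (map sorted_list_of_multiset lams)) = sum_list lams"
  by (induction lams) auto

lemma Dset_Sig: "of_nat (card (Dset n lams \<sigma>)) = Sig n (sum_list lams) \<sigma>"
  unfolding Dset_card Sig_Cnt using Cnt_perm[of "concat (map sorted_list_of_multiset lams)" "sorted_list_of_multiset (sum_list lams)" n \<sigma>]
  by (simp add: mset_concat_sorted)


lemma card_eq_witness:
  assumes "\<And>x. x \<in> A \<Longrightarrow> h x \<in> B" "\<And>y. y \<in> B \<Longrightarrow> h' y \<in> A"
    "\<And>x. x \<in> A \<Longrightarrow> h' (h x) = x" "\<And>y. y \<in> B \<Longrightarrow> h (h' y) = y"
  shows "card A = card B"
proof -
  have "bij_betw h A B" by (rule bij_betw_byWitness[of A h' h B]) (use assms in auto)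
  then show ?thesis by (rule bij_betw_same_card)
qed

lemma perm_facts:
  assumes "\<pi> permutes S"
  shows "bij \<pi>" "inv \<pi> permutes S" "inv (inv \<pi>) = \<pi>" "\<And>x. inv \<pi> (\<pi> x) = x" "\<And>x. \<pi> (inv \<pi> x) = x"
    "\<And>x. \<pi> x \<in> S \<longleftrightarrow> x \<in> S"
  using assms permutes_bij permutes_inv inv_inv_eq permutes_inverses permutes_in_image by metis+

lemma map_props:
  assumes p: "\<pi> permutes {1..n}" and d: "distinct (concat C)" and s: "set (concat C) \<subseteq> {1..n}"
  shows "distinct (concat (map (map \<pi>) C))" "set (concat (map (map \<pi>) C)) \<subseteq> {1..n}"
    "map length (map (map \<pi>) C) = map length C"
proof -
  have e: "concat (map (map \<pi>) C) = map \<pi> (concat C)" by (simp add: map_concat)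
  have inj: "inj \<pi>" using perm_facts(1)[OF p] bij_is_inj by blast
  show "distinct (concat (map (map \<pi>) C))" unfolding e using d inj by (simp add: distinct_map inj_on_def)
  show "set (concat (map (map \<pi>) C)) \<subseteq> {1..n}" unfolding e using s perm_facts(6)[OF p] by auto
  show "map length (map (map \<pi>) C) = map length C" by simp
qed

lemma conj_back:
  assumes "\<pi> permutes S"
  shows "inv \<pi> \<circ> (\<pi> \<circ> \<sigma> \<circ> inv \<pi>) \<circ> inv (inv \<pi>) = \<sigma>"
  using perm_facts[OF assms] by (simp add: fun_eq_iff)

lemma map_map_inv:
  assumes "\<pi> permutes S"
  shows "map (map (inv \<pi>)) (map (map \<pi>) C) = C" "map (map \<pi>) (map (map (inv \<pi>)) C) = C"
  using perm_facts(4,5)[OF assms] by (simp_all add: map_idI)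

lemma Cnt_conj:
  assumes p: "\<pi> permutes {1..n}"
  shows "Cnt n ws (\<pi> \<circ> \<sigma> \<circ> inv \<pi>) = Cnt n ws \<sigma>"
proof -
  have p': "inv \<pi> permutes {1..n}" using perm_facts(2)[OF p] .
  have main: "map (map q) C \<in> Cset n ws (q \<circ> \<tau> \<circ> inv q)" if q: "q permutes {1..n}" and C: "C \<in> Cset n ws \<tau>" for q \<tau> C
  proof -
    have d: "distinct (concat C)" "set (concat C) \<subseteq> {1..n}" using C unfolding Cset_def by auto
    have dc: "\<forall>c\<in>set C. distinct c" using d(1) by (simp add: distinct_concat_iff)
    show ?thesis using map_props[OF q d] C cycprod_conj[OF dc perm_facts(1)[OF q]] unfolding Cset_def by auto
  qed
  show ?thesis unfolding Cnt_def
  proof (rule card_eq_witness[where h="map (map (inv \<pi>))" and h'="map (map \<pi>)"])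
    fix C assume "C \<in> Cset n ws (\<pi> \<circ> \<sigma> \<circ> inv \<pi>)"
    from main[OF p' this] show "map (map (inv \<pi>)) C \<in> Cset n ws \<sigma>" using conj_back[OF p] by simp
  next
    fix C assume "C \<in> Cset n ws \<sigma>"
    from main[OF p this] show "map (map \<pi>) C \<in> Cset n ws (\<pi> \<circ> \<sigma> \<circ> inv \<pi>)" .
  qed (use map_map_inv[OF p] in auto)
qed

lemma valid_map:
  assumes p: "\<pi> permutes {1..n}" and v: "valid n cs lam"
  shows "valid n (map (map \<pi>) cs) lam"
proof -
  have d: "distinct (concat cs)" "set (concat cs) \<subseteq> {1..n}" using v unfolding valid_def by auto
  have "map length (map (map \<pi>) cs) = map length cs" by (rule map_props(3)[OF p d])
  then show ?thesis using map_props(1,2)[OF p d] v unfolding valid_def by simp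
qed

lemma Tup_map:
  assumes p: "\<pi> permutes {1..n}" and t: "tup \<in> Tup n lams"
  shows "map (map (map \<pi>)) tup \<in> Tup n lams"
  using t unfolding Tup_mem list_all2_map1
  by (rule list_all2_mono) (use valid_map[OF p] in auto)

lemma Oset_conj:
  assumes p: "\<pi> permutes {1..n}"
  shows "card (Oset n lams (\<pi> \<circ> \<sigma> \<circ> inv \<pi>)) = card (Oset n lams \<sigma>)"
proof -
  have p': "inv \<pi> permutes {1..n}" using perm_facts(2)[OF p] .
  have main: "map (map (map q)) t \<in> Oset n lams (q \<circ> \<tau> \<circ> inv q)" if q: "q permutes {1..n}" and t: "t \<in> Oset n lams \<tau>" for q \<tau> t
  proof -
    have tT: "t \<in> Tup n lams" using t unfolding Oset_def by simp
    have e1: "concat (map (map (map q)) t) = map (map q) (concat t)" by (simp add: map_concat)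
    have e2: "concat (concat (map (map (map q)) t)) = map q (concat (concat t))" by (simp add: map_concat)
    have inj: "inj q" using perm_facts(1)[OF q] bij_is_inj by blast
    have "\<not> distinct (concat (concat (map (map (map q)) t)))"
      unfolding e2 using t inj unfolding Oset_def by (simp add: distinct_map inj_on_def)
    moreover have "cycprod (concat (map (map (map q)) t)) = q \<circ> \<tau> \<circ> inv q"
      unfolding e1 using cycprod_conj[OF Tup_cyc_distinct[OF tT] perm_facts(1)[OF q]] t unfolding Oset_def by simp
    ultimately show ?thesis using Tup_map[OF q tT] unfolding Oset_def by simp
  qed
  have mm: "map (map (map (inv \<pi>))) (map (map (map \<pi>)) t) = t" "map (map (map \<pi>)) (map (map (map (inv \<pi>))) t) = t" for t
    using perm_facts(4,5)[OF p] by (simp_all add: map_idI)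
  show ?thesis
  proof (rule card_eq_witness[where h="map (map (map (inv \<pi>)))" and h'="map (map (map \<pi>))"])
    fix t assume "t \<in> Oset n lams (\<pi> \<circ> \<sigma> \<circ> inv \<pi>)"
    from main[OF p' this] show "map (map (map (inv \<pi>))) t \<in> Oset n lams \<sigma>" using conj_back[OF p] by simp
  next
    fix t assume "t \<in> Oset n lams \<sigma>"
    from main[OF p this] show "map (map (map \<pi>)) t \<in> Oset n lams (\<pi> \<circ> \<sigma> \<circ> inv \<pi>)" .
  qed (use mm in auto)
qed

section \<open>Existence of a cycle decomposition\<close>

lemma decomp_list:
  "cycle_decomp I p \<Longrightarrow> \<exists>C. distinct (concat C) \<and> set (concat C) = I \<and> p = cycprod C"
proof (induction rule: cycle_decomp.induct)
  case empty then show ?case by (intro exI[of _ "[]"]) simp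
next
  case (comp I p cs)
  then obtain C where "distinct (concat C)" "set (concat C) = I" "p = cycprod C" by blast
  then show ?case using comp by (intro exI[of _ "cs # C"]) auto
qed

lemma cycprod_filter: "cycprod (filter (\<lambda>c. 2 \<le> length c) C) = cycprod C"
proof (induction C)
  case (Cons c C)
  show ?case
  proof (cases "2 \<le> length c")
    case False
    then have "cycle_of_list c = id"
      by (cases c rule: cycle_of_list.cases) auto
    then show ?thesis using Cons False by simp
  qed (use Cons in simp)
qed simp

lemma distinct_concat_filter:
  "distinct (concat C) \<Longrightarrow> distinct (concat (filter P C)) \<and> set (concat (filter P C)) \<subseteq> set (concat C)"
  by (induction C) auto

lemma decomp_exists:
  assumes p: "\<sigma> permutes {1..n}"
  shows "\<exists>\<mu>. parts_ge2 \<mu> \<and> psize \<mu> \<le> n \<and> Cnt n (sorted_list_of_multiset \<mu>) \<sigma> \<noteq> 0"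
proof -
  obtain C where C: "distinct (concat C)" "set (concat C) = {1..n}" "\<sigma> = cycprod C"
    using decomp_list[OF cycle_decomposition[OF p]] by auto
  define C2 where "C2 = filter (\<lambda>c. 2 \<le> length c) C"
  have d2: "distinct (concat C2)" "set (concat C2) \<subseteq> {1..n}"
    using distinct_concat_filter[OF C(1)] C(2) unfolding C2_def by auto
  have s2: "cycprod C2 = \<sigma>" using cycprod_filter C(3) unfolding C2_def by simp
  define ws where "ws = map length C2"
  define \<mu> where "\<mu> = mset ws"
  have "C2 \<in> Cset n ws \<sigma>" unfolding Cset_def ws_def using d2 s2 by simp
  then have "Cnt n ws \<sigma> \<noteq> 0" unfolding Cnt_def using finite_Cset by (metis card_0_eq empty_iff)
  moreover have "Cnt n (sorted_list_of_multiset \<mu>) \<sigma> = Cnt n ws \<sigma>"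
    by (rule Cnt_perm) (simp add: \<mu>_def)
  moreover have "parts_ge2 \<mu>" unfolding parts_ge2_def \<mu>_def ws_def C2_def by auto
  moreover have "psize \<mu> \<le> n"
  proof -
    have "psize \<mu> = sum_list ws" unfolding psize_def \<mu>_def by (simp add: sum_mset_sum_list)
    also have "\<dots> = length (concat C2)" unfolding ws_def by (simp add: length_concat)
    also have "\<dots> = card (set (concat C2))" using distinct_card[OF d2(1)] by simp
    also have "\<dots> \<le> card {1..n}" by (rule card_mono) (use d2 in auto)
    finally show ?thesis by simp
  qed
  ultimately show ?thesis by auto
qed

section \<open>Canonical representatives\<close>

fun canon :: "nat list \<Rightarrow> nat \<Rightarrow> nat list list" where
  "canon [] s = []"
| "canon (k # ks) s = [s..<s+k] # canon ks (s+k)"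

lemma canon_len: "map length (canon ks s) = ks"
  by (induction ks arbitrary: s) auto

lemma canon_concat: "concat (canon ks s) = [s..<s + sum_list ks]"
proof (induction ks arbitrary: s)
  case (Cons k ks)
  have "[s..<s + k + sum_list ks] = [s..<s+k] @ [s+k..<s + k + sum_list ks]"
    by (rule upt_add_eq_append) simp
  then show ?case using Cons by (simp add: add.assoc)
qed simp

definition sig0 :: "nat multiset \<Rightarrow> nat \<Rightarrow> nat" where
  "sig0 \<mu> = cycprod (canon (sorted_list_of_multiset \<mu>) 1)"

lemma psize_sorted: "sum_list (sorted_list_of_multiset \<mu>) = psize \<mu>"
  unfolding psize_def by (metis mset_sorted_list_of_multiset sum_mset_sum_list)

lemma canon_in:
  assumes "psize \<mu> \<le> n"
  shows "canon (sorted_list_of_multiset \<mu>) 1 \<in> Cset n (sorted_list_of_multiset \<mu>) (sig0 \<mu>)"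
proof -
  have "set (concat (canon (sorted_list_of_multiset \<mu>) 1)) = {1..<1 + psize \<mu>}"
    by (simp only: canon_concat psize_sorted set_upt)
  then have "set (concat (canon (sorted_list_of_multiset \<mu>) 1)) \<subseteq> {1..n}" using assms by auto
  moreover have "distinct (concat (canon (sorted_list_of_multiset \<mu>) 1))" by (simp only: canon_concat distinct_upt)
  ultimately show ?thesis unfolding Cset_def sig0_def by (simp add: canon_len)
qed

lemma Cnt_sig0_pos:
  assumes "psize \<mu> \<le> n"
  shows "Cnt n (sorted_list_of_multiset \<mu>) (sig0 \<mu>) \<ge> 1"
  using canon_in[OF assms] finite_Cset unfolding Cnt_def
  by (metis One_nat_def Suc_leI card_gt_0_iff empty_iff)

lemma perm_extend:
  fixes xs ys :: "nat list"
  assumes A: "finite A" and d: "distinct xs" "distinct ys" and l: "length xs = length ys"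
    and s: "set xs \<subseteq> A" "set ys \<subseteq> A"
  shows "\<exists>\<pi>. \<pi> permutes A \<and> map \<pi> xs = ys"
proof -
  define xs' where "xs' = xs @ sorted_list_of_set (A - set xs)"
  define ys' where "ys' = ys @ sorted_list_of_set (A - set ys)"
  have dx: "distinct xs'" "set xs' = A" unfolding xs'_def using d s A by auto
  have dy: "distinct ys'" "set ys' = A" unfolding ys'_def using d s A by auto
  have lx: "length xs' = card A" using distinct_card[OF dx(1)] dx(2) by simp
  have ly: "length ys' = card A" using distinct_card[OF dy(1)] dy(2) by simp
  let ?N = "{..<card A}"
  have bx: "bij_betw ((!) xs') ?N A" by (rule bij_betw_nth[OF dx(1)]) (use lx dx in auto)
  have by': "bij_betw ((!) ys') ?N A" by (rule bij_betw_nth[OF dy(1)]) (use ly dy in auto)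
  define f where "f = (\<lambda>x. ys' ! (inv_into ?N ((!) xs') x))"
  have bf: "bij_betw f A A"
  proof -
    have "bij_betw (((!) ys') \<circ> inv_into ?N ((!) xs')) A A"
      by (rule bij_betw_trans[OF bij_betw_inv_into[OF bx] by'])
    then show ?thesis unfolding f_def comp_def .
  qed
  define \<pi> where "\<pi> = (\<lambda>x. if x \<in> A then f x else x)"
  have "bij_betw \<pi> A A" using bf unfolding \<pi>_def by (rule bij_betw_cong[THEN iffD1, rotated]) simp
  then have pp: "\<pi> permutes A" by (rule bij_imp_permutes) (simp add: \<pi>_def)
  have "map \<pi> xs = ys"
  proof (rule nth_equalityI)
    show "length (map \<pi> xs) = length ys" using l by simp
    fix i assume i: "i < length (map \<pi> xs)"
    then have i': "i < length xs" by simp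
    have xi: "xs ! i = xs' ! i" "ys ! i = ys' ! i" unfolding xs'_def ys'_def using i' l by (auto simp: nth_append)
    have iN: "i \<in> ?N" using i' lx unfolding xs'_def by simp
    have inj: "inj_on ((!) xs') ?N" using bx bij_betw_def by blast
    have "xs' ! i \<in> A" using iN bx bij_betwE by blast
    then have "\<pi> (xs' ! i) = ys' ! i" unfolding \<pi>_def f_def using inv_into_f_f[OF inj iN] by simp
    then show "map \<pi> xs ! i = ys ! i" using xi i' by simp
  qed
  then show ?thesis using pp by blast
qed

lemma conj_canon:
  assumes v: "valid n cs0 \<mu>" and m: "psize \<mu> \<le> n"
  shows "\<exists>\<pi>. \<pi> permutes {1..n} \<and> cycprod cs0 = \<pi> \<circ> sig0 \<mu> \<circ> inv \<pi>"
proof -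
  let ?K = "canon (sorted_list_of_multiset \<mu>) 1"
  have K: "?K \<in> Cset n (sorted_list_of_multiset \<mu>) (sig0 \<mu>)" by (rule canon_in[OF m])
  have v': "map length cs0 = sorted_list_of_multiset \<mu>" "distinct (concat cs0)" "set (concat cs0) \<subseteq> {1..n}"
    using v unfolding valid_def by auto
  have dK: "distinct (concat ?K)" "set (concat ?K) \<subseteq> {1..n}" using K unfolding Cset_def by auto
  have l: "length (concat ?K) = length (concat cs0)"
    using v'(1) canon_len by (simp add: length_concat)
  obtain \<pi> where \<pi>: "\<pi> permutes {1..n}" "map \<pi> (concat ?K) = concat cs0"
    using perm_extend[OF _ dK(1) v'(2) l dK(2) v'(3)] by auto
  have "map (map \<pi>) ?K = cs0"
  proof (rule concat_inj)
    show "map length (map (map \<pi>) ?K) = map length cs0"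
      using v'(1) canon_len[of "sorted_list_of_multiset \<mu>" 1] by (simp add: comp_def)
    show "concat (map (map \<pi>) ?K) = concat cs0" using \<pi>(2) by (simp add: map_concat)
  qed
  moreover have "\<forall>c\<in>set ?K. distinct c" using dK(1) by (simp add: distinct_concat_iff)
  ultimately have "cycprod cs0 = \<pi> \<circ> sig0 \<mu> \<circ> inv \<pi>"
    using cycprod_conj[of ?K \<pi>] perm_facts(1)[OF \<pi>(1)] unfolding sig0_def by simp
  then show ?thesis using \<pi>(1) by blast
qed

lemma Cnt_unique:
  assumes "parts_ge2 \<mu>" "parts_ge2 \<nu>"
    and "Cnt n (sorted_list_of_multiset \<mu>) \<sigma> \<noteq> 0" "Cnt n (sorted_list_of_multiset \<nu>) \<sigma> \<noteq> 0"
  shows "\<mu> = \<nu>"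
proof -
  obtain C where C: "C \<in> Cset n (sorted_list_of_multiset \<mu>) \<sigma>"
    using assms(3) unfolding Cnt_def by (metis card.empty ex_in_conv)
  obtain D where D: "D \<in> Cset n (sorted_list_of_multiset \<nu>) \<sigma>"
    using assms(4) unfolding Cnt_def by (metis card.empty ex_in_conv)
  have lC: "\<forall>c\<in>set C. 2 \<le> length c"
  proof
    fix c assume c: "c \<in> set C"
    have ml: "map length C = sorted_list_of_multiset \<mu>" using C unfolding Cset_def by simp
    have "length c \<in> set (sorted_list_of_multiset \<mu>)" using c unfolding ml[symmetric] by simp
    then have "length c \<in># \<mu>" by simp
    then show "2 \<le> length c" using assms(1) unfolding parts_ge2_def by blast
  qed
  have lD: "\<forall>c\<in>set D. 2 \<le> length c"
  proof
    fix c assume c: "c \<in> set D"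
    have ml: "map length D = sorted_list_of_multiset \<nu>" using D unfolding Cset_def by simp
    have "length c \<in> set (sorted_list_of_multiset \<nu>)" using c unfolding ml[symmetric] by simp
    then have "length c \<in># \<nu>" by simp
    then show "2 \<le> length c" using assms(2) unfolding parts_ge2_def by blast
  qed
  have e: "mset (map length C) = mset (map length D)"
    by (rule shape_unique[OF _ lC _ lD]) (use C D in \<open>auto simp: Cset_def\<close>)
  have "map length C = sorted_list_of_multiset \<mu>" "map length D = sorted_list_of_multiset \<nu>"
    using C D unfolding Cset_def by auto
  then have "mset (map length C) = \<mu>" "mset (map length D) = \<nu>" by simp_all
  then show ?thesis using e by simp
qed

lemma length_le_sum: "\<forall>k\<in>set xs. (1::nat) \<le> k \<Longrightarrow> length xs \<le> sum_list xs"
  by (induction xs) auto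

lemma finite_parts: "finite {\<mu>. parts_ge2 \<mu> \<and> psize \<mu> \<le> n}"
proof -
  have "{\<mu>. parts_ge2 \<mu> \<and> psize \<mu> \<le> n} \<subseteq> mset ` {xs. set xs \<subseteq> {0..n} \<and> length xs \<le> n}"
  proof
    fix \<mu> assume a: "\<mu> \<in> {\<mu>. parts_ge2 \<mu> \<and> psize \<mu> \<le> n}"
    let ?xs = "sorted_list_of_multiset \<mu>"
    have sx: "sum_list ?xs \<le> n" using a psize_sorted by simp
    have ge: "\<forall>k\<in>set ?xs. 1 \<le> k" using a unfolding parts_ge2_def by auto
    have "\<forall>k\<in>set ?xs. k \<le> sum_list ?xs" by (simp add: member_le_sum_list)
    then have "set ?xs \<subseteq> {0..n}" using sx by auto
    moreover have "length ?xs \<le> sum_list ?xs" by (rule length_le_sum[OF ge])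
    ultimately show "\<mu> \<in> mset ` {xs. set xs \<subseteq> {0..n} \<and> length xs \<le> n}"
      using sx by (intro image_eqI[of _ _ ?xs]) auto
  qed
  moreover have "finite {xs. set xs \<subseteq> {0..n::nat} \<and> length xs \<le> n}" by (rule finite_lists_length_le) simp
  ultimately show ?thesis using finite_subset by blast
qed


lemma count_bound:
  assumes n: "1 \<le> n"
  shows "card {w :: nat list. length w = P \<and> set w \<subseteq> {1..n} \<and> card (set w - {1..m}) \<le> E}
         \<le> (m+E+1)^P * ((E+1) * n^E)"
proof -
  let ?W = "{w :: nat list. length w = P \<and> set w \<subseteq> {1..n} \<and> card (set w - {1..m}) \<le> E}"
  let ?Pat = "{p :: nat list. set p \<subseteq> {0..m+E} \<and> length p = P}"
  let ?Val = "{v :: nat list. set v \<subseteq> {1..n} \<and> length v \<le> E}"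
  define g where "g = (\<lambda>(p, v). map (\<lambda>y. if y \<le> m then y else (v :: nat list) ! (y - m - 1)) (p :: nat list))"
  have sub: "?W \<subseteq> g ` (?Pat \<times> ?Val)"
  proof
    fix w assume w: "w \<in> ?W"
    define v where "v = sorted_list_of_set (set w - {1..m})"
    have v: "distinct v" "set v = set w - {1..m}" "length v = card (set w - {1..m})"
      unfolding v_def by auto
    define ix where "ix = (\<lambda>x. inv_into {..<length v} ((!) v) x)"
    have ixp: "ix x < length v \<and> v ! (ix x) = x" if "x \<in> set v" for x
    proof -
      have xi: "x \<in> (!) v ` {..<length v}" using that by (auto simp: in_set_conv_nth)
      show ?thesis unfolding ix_def using inv_into_into[OF xi] f_inv_into_f[OF xi] by simp
    qed
    define p where "p = map (\<lambda>x. if x \<le> m then x else m + 1 + ix x) w"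
    have pP: "p \<in> ?Pat"
    proof -
      have "\<forall>x\<in>set w. (if x \<le> m then x else m + 1 + ix x) \<le> m + E"
      proof
        fix x assume x: "x \<in> set w"
        show "(if x \<le> m then x else m + 1 + ix x) \<le> m + E"
        proof (cases "x \<le> m")
          case False
          then have "x \<in> set v" using v(2) x by auto
          then have "ix x < length v" using ixp by blast
          moreover have "length v \<le> E" using v(3) w by simp
          ultimately show ?thesis using False by simp
        qed simp
      qed
      then show ?thesis unfolding p_def using w by auto
    qed
    have vV: "v \<in> ?Val" using v w by auto
    define h where "h = (\<lambda>y. if y \<le> m then y else v ! (y - m - 1))"
    have "g (p, v) = map h p" unfolding g_def h_def by simp
    also have "\<dots> = map (\<lambda>x. h (if x \<le> m then x else m + 1 + ix x)) w" unfolding p_def by simp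
    also have "\<dots> = w"
    proof (rule map_idI)
      fix x assume x: "x \<in> set w"
      show "h (if x \<le> m then x else m + 1 + ix x) = x"
      proof (cases "x \<le> m")
        case False
        then have "x \<in> set v" using v(2) x by auto
        then show ?thesis using ixp False unfolding h_def by simp
      qed (simp add: h_def)
    qed
    finally have gw: "g (p, v) = w" .
    show "w \<in> g ` (?Pat \<times> ?Val)" by (rule image_eqI[of _ _ "(p, v)"]) (use gw pP vV in auto)
  qed
  have fP: "finite ?Pat" by (rule finite_lists_length_eq) simp
  have fV: "finite ?Val" by (rule finite_lists_length_le) simp
  have "card ?W \<le> card (g ` (?Pat \<times> ?Val))"
    by (rule card_mono) (use fP fV sub in auto)
  also have "\<dots> \<le> card (?Pat \<times> ?Val)" by (rule card_image_le) (use fP fV in auto)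
  also have "\<dots> = card ?Pat * card ?Val" by (rule card_cartesian_product)
  also have "card ?Pat = (m+E+1)^P" by (simp add: card_lists_length_eq)
  also have "card ?Val = (\<Sum>i\<le>E. n^i)" by (simp add: card_lists_length_le)
  also have "\<dots> \<le> (\<Sum>i\<le>E. n^E)" by (rule sum_mono) (use n in \<open>auto intro: power_increasing\<close>)
  also have "\<dots> = (E+1) * n^E" by simp
  finally show ?thesis by simp
qed

lemma lsum_len: "\<forall>c\<in>set C. 1 \<le> length c \<Longrightarrow> lsum C + length C = sum_list (map length C)"
  unfolding lsum_def by (induction C) auto

lemma sum_list_diff:
  "\<forall>x\<in>set xs. g x \<le> (f x :: nat) \<Longrightarrow> sum_list (map (\<lambda>x. f x - g x) xs) = sum_list (map f xs) - sum_list (map g xs)"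
proof (induction xs)
  case (Cons a xs)
  have "sum_list (map g xs) \<le> sum_list (map f xs)"
    using Cons.prems by (intro sum_list_mono) auto
  then show ?case using Cons by auto
qed simp

lemma plen_le_psize: "parts_ge2 lam \<Longrightarrow> plen lam \<le> psize lam"
proof -
  assume a: "parts_ge2 lam"
  have "\<forall>k\<in>set (sorted_list_of_multiset lam). 1 \<le> k" using a unfolding parts_ge2_def by auto
  then have "length (sorted_list_of_multiset lam) \<le> sum_list (sorted_list_of_multiset lam)"
    by (rule length_le_sum)
  moreover have "length (sorted_list_of_multiset lam) = plen lam"
    unfolding plen_def by (metis mset_sorted_list_of_multiset size_mset)
  ultimately show ?thesis using psize_sorted by simp
qed

lemma pl_sum:
  assumes "\<forall>lam\<in>set lams. parts_ge2 lam"
  shows "(\<Sum>lam\<leftarrow>lams. pl lam) = (\<Sum>lam\<leftarrow>lams. psize lam) - (\<Sum>lam\<leftarrow>lams. plen lam)"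
  unfolding pl_def by (rule sum_list_diff) (use assms plen_le_psize in blast)


locale setting =
  fixes lams :: "nat multiset list" and \<mu> :: "nat multiset"
  assumes lams: "\<forall>lam\<in>set lams. parts_ge2 lam" and mu: "parts_ge2 \<mu>"
begin

definition "PP = (\<Sum>lam\<leftarrow>lams. psize lam)"
definition "NN = (\<Sum>lam\<leftarrow>lams. plen lam)"

lemma tup_facts:
  assumes t: "tup \<in> Tup n lams"
  shows "sum_list (map length (concat tup)) = PP" "length (concat tup) = NN"
    "\<forall>c\<in>set (concat tup). 2 \<le> length c"
    "length (concat (concat tup)) = PP"
proof -
  have ml: "map length (concat tup) = concat (map sorted_list_of_multiset lams)"
    using Tup_shape[OF t] by (simp add: map_concat)
  have "sum_list (concat (map sorted_list_of_multiset lams)) = PP"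
    unfolding PP_def by (induction lams) (auto simp: psize_sorted)
  then show "sum_list (map length (concat tup)) = PP" using ml by simp
  then show "length (concat (concat tup)) = PP" by (simp add: length_concat)
  have "length (concat (map sorted_list_of_multiset lams)) = NN"
    unfolding NN_def plen_def by (induction lams) (auto, metis mset_sorted_list_of_multiset size_mset)
  then show "length (concat tup) = NN" using ml by (metis length_map)
  show "\<forall>c\<in>set (concat tup). 2 \<le> length c"
  proof
    fix c assume "c \<in> set (concat tup)"
    then have "length c \<in> set (concat (map sorted_list_of_multiset lams))" using ml
      by (metis image_eqI list.set_map)
    then obtain lam where "lam \<in> set lams" "length c \<in># lam" by auto
    then show "2 \<le> length c" using lams unfolding parts_ge2_def by blast
  qed
qed

lemma oset_facts:
  assumes t: "tup \<in> Oset n lams (sig0 \<mu>)"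
  shows "psize \<mu> + NN \<le> plen \<mu> + PP" "plen \<mu> + 2 * card (set (concat (concat tup))) + 2 \<le> PP + NN + psize \<mu>"
    "psize \<mu> \<le> card (set (concat (concat tup)))"
proof -
  let ?C = "concat tup"
  let ?U = "set (concat ?C)"
  let ?K = "canon (sorted_list_of_multiset \<mu>) 1"
  let ?m = "psize \<mu>"
  have tT: "tup \<in> Tup n lams" using t unfolding Oset_def by simp
  have nd: "\<not> distinct (concat ?C)" and prod: "cycprod ?C = sig0 \<mu>" using t unfolding Oset_def by auto
  note tf = tup_facts[OF tT]
  have cd: "\<forall>c\<in>set ?C. distinct c" by (rule Tup_cyc_distinct[OF tT])
  have fU: "finite ?U" by simp
  have dK: "distinct (concat ?K)" by (simp only: canon_concat distinct_upt)
  have sK: "set (concat ?K) = {1..<1 + ?m}" by (simp only: canon_concat psize_sorted set_upt)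
  have lK: "\<forall>c\<in>set ?K. 2 \<le> length c"
  proof
    fix c assume c: "c \<in> set ?K"
    have "length c \<in> set (map length ?K)" using c by simp
    then have "length c \<in># \<mu>" by (simp add: canon_len)
    then show "2 \<le> length c" using mu unfolding parts_ge2_def by blast
  qed
  have KU: "set (concat ?K) \<subseteq> ?U"
  proof
    fix x assume x: "x \<in> set (concat ?K)"
    then obtain c where c: "c \<in> set ?K" "x \<in> set c" by auto
    have dc: "distinct c" using dK c(1) by (metis distinct_concat_iff)
    have "sig0 \<mu> x = cycle_of_list c x" unfolding sig0_def by (rule cycprod_disj_on[OF dK c])
    also have "\<dots> \<noteq> x" using cycle_moves[OF dc _ c(2)] lK c(1) by auto
    finally have "cycprod ?C x \<noteq> x" using prod by simp
    then show "x \<in> ?U" using cycprod_outside by metis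
  qed
  then show mU: "?m \<le> card ?U"
    using card_mono[OF fU KU] sK by simp
  have nc: "ncyc ?U (sig0 \<mu>) = plen \<mu> + (card ?U - ?m)"
  proof -
    have ne: "\<forall>c\<in>set ?K. c \<noteq> []" using lK by fastforce
    have "ncyc ?U (sig0 \<mu>) = length ?K + card (?U - set (concat ?K))"
      unfolding sig0_def by (rule ncyc_disj[OF dK ne KU fU])
    moreover have "length ?K = plen \<mu>"
      using canon_len[of "sorted_list_of_multiset \<mu>" 1] unfolding plen_def
      by (metis length_map mset_sorted_list_of_multiset size_mset)
    moreover have "card (?U - set (concat ?K)) = card ?U - ?m"
      using card_Diff_subset[OF _ KU] sK by simp
    ultimately show ?thesis by simp
  qed
  have ge: "card ?U \<le> ncyc ?U (cycprod ?C) + lsum ?C" by (rule ncyc_prod_ge) auto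
  have le: "ncyc ?U (cycprod ?C) + 2 * card ?U \<le> card ?U + lsum ?C + 2 * dcount ?C"
    by (rule ncyc_prod_le) (use cd in auto)
  have dl: "dcount ?C < length ?C" by (rule dcount_less[OF cd nd])
  have ll: "lsum ?C + NN = PP"
    using lsum_len[of ?C] tf by fastforce
  show "?m + NN \<le> plen \<mu> + PP" using ge nc prod ll mU by simp
  show "plen \<mu> + 2 * card ?U + 2 \<le> PP + NN + ?m" using le nc prod ll mU dl tf(2) by simp
qed

definition "YY = PP + NN + pl \<mu>"
definition "EE = (YY - 2 - 2 * psize \<mu>) div 2"

lemma plen_psize_mu: "plen \<mu> \<le> psize \<mu>" using plen_le_psize[OF mu] .

lemma oset_card_bound:
  assumes n: "1 \<le> n"
  shows "card (Oset n lams (sig0 \<mu>)) \<le> (psize \<mu> + EE + 1)^PP * ((EE+1) * n^EE)"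
proof -
  let ?W = "{w :: nat list. length w = PP \<and> set w \<subseteq> {1..n} \<and> card (set w - {1..psize \<mu>}) \<le> EE}"
  have inj: "inj_on (\<lambda>t. concat (concat t)) (Oset n lams (sig0 \<mu>))"
  proof (rule inj_onI)
    fix a b assume a: "a \<in> Oset n lams (sig0 \<mu>)" and b: "b \<in> Oset n lams (sig0 \<mu>)"
      and e: "concat (concat a) = concat (concat b)"
    have aT: "a \<in> Tup n lams" and bT: "b \<in> Tup n lams" using a b unfolding Oset_def by auto
    have sa: "map (map length) a = map (map length) b" using Tup_shape[OF aT] Tup_shape[OF bT] by simp
    then have "map length (concat a) = map length (concat b)" by (simp add: map_concat)
    then have "concat a = concat b" by (rule concat_inj[OF _ e])
    moreover have "map length a = map length b"
      using arg_cong[OF sa, of "map length"] by (simp add: comp_def)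
    ultimately show "a = b" using concat_inj by blast
  qed
  have img: "(\<lambda>t. concat (concat t)) ` Oset n lams (sig0 \<mu>) \<subseteq> ?W"
  proof
    fix w assume "w \<in> (\<lambda>t. concat (concat t)) ` Oset n lams (sig0 \<mu>)"
    then obtain t where t: "t \<in> Oset n lams (sig0 \<mu>)" "w = concat (concat t)" by blast
    have tT: "t \<in> Tup n lams" using t unfolding Oset_def by simp
    have "length w = PP" using tup_facts(4)[OF tT] t by simp
    moreover have "set w \<subseteq> {1..n}" using Tup_set[OF tT] t by simp
    moreover have "card (set w - {1..psize \<mu>}) \<le> EE"
    proof -
      note of = oset_facts[OF t(1)]
      have "card (set w - {1..psize \<mu>}) = card (set w) - psize \<mu>"
      proof -
        have "{1..psize \<mu>} \<subseteq> set w"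
        proof -
          have sub: "set (concat (canon (sorted_list_of_multiset \<mu>) 1)) \<subseteq> set w"
          proof
            fix x assume x: "x \<in> set (concat (canon (sorted_list_of_multiset \<mu>) 1))"
            then obtain c where c: "c \<in> set (canon (sorted_list_of_multiset \<mu>) 1)" "x \<in> set c" by auto
            have dK: "distinct (concat (canon (sorted_list_of_multiset \<mu>) 1))" by (simp only: canon_concat distinct_upt)
            have dc: "distinct c" using dK c(1) by (metis distinct_concat_iff)
            have "length c \<in># \<mu>" using c(1) canon_len[of "sorted_list_of_multiset \<mu>" 1]
              by (metis image_eqI list.set_map set_mset_mset mset_sorted_list_of_multiset)
            then have "2 \<le> length c" using mu unfolding parts_ge2_def by blast
            then have "sig0 \<mu> x \<noteq> x"
              using cycprod_disj_on[OF dK c] cycle_moves[OF dc _ c(2)] unfolding sig0_def by simp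
            then have "cycprod (concat t) x \<noteq> x" using t unfolding Oset_def by simp
            then show "x \<in> set w" using cycprod_outside t(2) by metis
          qed
          moreover have "set (concat (canon (sorted_list_of_multiset \<mu>) 1)) = {1..psize \<mu>}"
            by (simp only: canon_concat psize_sorted set_upt) auto
          ultimately show ?thesis by simp
        qed
        then show ?thesis using card_Diff_subset[of "{1..psize \<mu>}" "set w"] by simp
      qed
      moreover have "2 * (card (set w) - psize \<mu>) \<le> YY - 2 - 2 * psize \<mu>"
        using of(2,3) t(2) plen_psize_mu unfolding YY_def pl_def by simp
      ultimately show ?thesis unfolding EE_def by simp
    qed
    ultimately show "w \<in> ?W" by simp
  qed
  have "card (Oset n lams (sig0 \<mu>)) \<le> card ?W"
  proof (rule card_inj_on_le[OF inj img])
    have "?W \<subseteq> {w. set w \<subseteq> {1..n} \<and> length w = PP}" by auto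
    moreover have "finite {w :: nat list. set w \<subseteq> {1..n} \<and> length w = PP}" by (rule finite_lists_length_eq) simp
    ultimately show "finite ?W" by (rule finite_subset)
  qed
  also have "\<dots> \<le> (psize \<mu> + EE + 1)^PP * ((EE+1) * n^EE)" by (rule count_bound[OF n])
  finally show ?thesis .
qed

lemma oset_empty_small:
  assumes "YY < 2 + 2 * psize \<mu>"
  shows "Oset n lams (sig0 \<mu>) = {}"
proof (rule ccontr)
  assume "Oset n lams (sig0 \<mu>) \<noteq> {}"
  then obtain t where t: "t \<in> Oset n lams (sig0 \<mu>)" by blast
  note of = oset_facts[OF t]
  show False using of(2,3) assms plen_psize_mu unfolding YY_def pl_def by simp
qed

lemma oset_empty_vanish:
  assumes "pl \<mu> > (\<Sum>lam\<leftarrow>lams. pl lam) \<or>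
         (pl \<mu> = (\<Sum>lam\<leftarrow>lams. pl lam) \<and> plen \<mu> \<ge> (\<Sum>lam\<leftarrow>lams. plen lam))"
  shows "Oset n lams (sig0 \<mu>) = {}"
proof (rule ccontr)
  assume "Oset n lams (sig0 \<mu>) \<noteq> {}"
  then obtain t where t: "t \<in> Oset n lams (sig0 \<mu>)" by blast
  note of = oset_facts[OF t]
  have ps: "(\<Sum>lam\<leftarrow>lams. pl lam) = PP - NN" unfolding PP_def NN_def by (rule pl_sum[OF lams])
  have "NN \<le> PP" unfolding PP_def NN_def
    by (rule sum_list_mono) (use lams plen_le_psize in blast)
  then show False using assms of ps plen_psize_mu unfolding pl_def NN_def[symmetric] by auto
qed

end


definition rcf :: "nat multiset list \<Rightarrow> nat multiset \<Rightarrow> nat \<Rightarrow> complex" where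
  "rcf lams \<mu> n = (if parts_ge2 \<mu> \<and> psize \<mu> \<le> n
     then of_nat (card (Oset n lams (sig0 \<mu>))) / of_nat (Cnt n (sorted_list_of_multiset \<mu>) (sig0 \<mu>))
     else 0)"

lemma osum:
  "of_nat (card (Oset n lams \<sigma>)) = (\<Sum>\<mu>\<in>{\<mu>. parts_ge2 \<mu> \<and> psize \<mu> \<le> n}. rcf lams \<mu> n * Sig n \<mu> \<sigma>)"
proof -
  let ?M = "{\<mu>. parts_ge2 \<mu> \<and> psize \<mu> \<le> n}"
  have fM: "finite ?M" by (rule finite_parts)
  show ?thesis
  proof (cases "\<exists>\<mu>0\<in>?M. Cnt n (sorted_list_of_multiset \<mu>0) \<sigma> \<noteq> 0")
    case True
    then obtain \<mu>0 where m0: "\<mu>0 \<in> ?M" "Cnt n (sorted_list_of_multiset \<mu>0) \<sigma> \<noteq> 0" by blast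
    have others: "rcf lams \<mu> n * Sig n \<mu> \<sigma> = 0" if "\<mu> \<in> ?M - {\<mu>0}" for \<mu>
    proof -
      have "Cnt n (sorted_list_of_multiset \<mu>) \<sigma> = 0"
        using Cnt_unique[of \<mu> \<mu>0 n \<sigma>] that m0 by auto
      then show ?thesis by (simp add: Sig_Cnt)
    qed
    have "(\<Sum>\<mu>\<in>?M. rcf lams \<mu> n * Sig n \<mu> \<sigma>) = rcf lams \<mu>0 n * Sig n \<mu>0 \<sigma> + (\<Sum>\<mu>\<in>?M - {\<mu>0}. rcf lams \<mu> n * Sig n \<mu> \<sigma>)"
      by (rule sum.remove[OF fM m0(1)])
    also have "(\<Sum>\<mu>\<in>?M - {\<mu>0}. rcf lams \<mu> n * Sig n \<mu> \<sigma>) = 0"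
      using others by (intro sum.neutral) blast
    finally have s: "(\<Sum>\<mu>\<in>?M. rcf lams \<mu> n * Sig n \<mu> \<sigma>) = rcf lams \<mu>0 n * Sig n \<mu>0 \<sigma>" by simp
    obtain cs0 where cs0: "cs0 \<in> Cset n (sorted_list_of_multiset \<mu>0) \<sigma>"
      using m0(2) unfolding Cnt_def by (metis card.empty ex_in_conv)
    have v: "valid n cs0 \<mu>0" using cs0 unfolding Cset_def valid_def by simp
    have cp: "cycprod cs0 = \<sigma>" using cs0 unfolding Cset_def by simp
    obtain \<pi> where \<pi>: "\<pi> permutes {1..n}" "cycprod cs0 = \<pi> \<circ> sig0 \<mu>0 \<circ> inv \<pi>"
      using conj_canon[OF v] m0(1) by auto
    have se: "\<sigma> = \<pi> \<circ> sig0 \<mu>0 \<circ> inv \<pi>" using \<pi>(2) cp by simp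
    have O: "card (Oset n lams \<sigma>) = card (Oset n lams (sig0 \<mu>0))" unfolding se by (rule Oset_conj[OF \<pi>(1)])
    have Cn: "Cnt n (sorted_list_of_multiset \<mu>0) \<sigma> = Cnt n (sorted_list_of_multiset \<mu>0) (sig0 \<mu>0)"
      unfolding se by (rule Cnt_conj[OF \<pi>(1)])
    have pos: "Cnt n (sorted_list_of_multiset \<mu>0) (sig0 \<mu>0) \<ge> 1" using Cnt_sig0_pos m0(1) by simp
    have "rcf lams \<mu>0 n * Sig n \<mu>0 \<sigma> = of_nat (card (Oset n lams \<sigma>))"
      unfolding rcf_def Sig_Cnt using m0(1) O Cn pos by simp
    then show ?thesis using s by simp
  next
    case False
    then have z: "\<And>\<mu>. \<mu> \<in> ?M \<Longrightarrow> Sig n \<mu> \<sigma> = 0" by (simp add: Sig_Cnt)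
    have "Oset n lams \<sigma> = {}"
    proof (rule ccontr)
      assume "Oset n lams \<sigma> \<noteq> {}"
      then obtain t where t: "t \<in> Oset n lams \<sigma>" by blast
      then have tT: "t \<in> Tup n lams" and ts: "cycprod (concat t) = \<sigma>" unfolding Oset_def by auto
      have "\<sigma> permutes {1..n}" using cycprod_permutes_sub[OF Tup_set[OF tT]] ts by simp
      then show False using decomp_exists False by blast
    qed
    then show ?thesis using z by simp
  qed
qed

theorem mainTheorem6:
  fixes lams :: "nat multiset list"
  assumes "length lams \<ge> 1"
    and "\<forall>lam \<in> set lams. parts_ge2 lam"
  shows "\<exists>rc :: nat multiset \<Rightarrow> nat \<Rightarrow> complex.
     (\<forall>n. gprod n (map (Sig n) lams) =
          (\<lambda>\<sigma>. Sig n (sum_list lams) \<sigma>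
              + (\<Sum>\<mu> \<in> {\<mu>. parts_ge2 \<mu> \<and> psize \<mu> \<le> n}. rc \<mu> n * Sig n \<mu> \<sigma>)))
   \<and> (\<forall>\<mu>. parts_ge2 \<mu> \<longrightarrow>
        (\<lambda>n. norm (rc \<mu> n)) \<in>
          O(\<lambda>n. real n powr ((real (pl \<mu>) + real (\<Sum>lam\<leftarrow>lams. psize lam)
                               + real (\<Sum>lam\<leftarrow>lams. plen lam)) / 2
                              - real (psize \<mu>) - 1)))
   \<and> (\<forall>\<mu> n. parts_ge2 \<mu> \<and>
        (pl \<mu> > (\<Sum>lam\<leftarrow>lams. pl lam) \<or>
         (pl \<mu> = (\<Sum>lam\<leftarrow>lams. pl lam) \<and> plen \<mu> \<ge> (\<Sum>lam\<leftarrow>lams. plen lam)))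
        \<longrightarrow> rc \<mu> n = 0)"
proof (intro exI[of _ "rcf lams"] conjI allI impI)
  fix n
  show "gprod n (map (Sig n) lams) =
          (\<lambda>\<sigma>. Sig n (sum_list lams) \<sigma>
              + (\<Sum>\<mu> \<in> {\<mu>. parts_ge2 \<mu> \<and> psize \<mu> \<le> n}. rcf lams \<mu> n * Sig n \<mu> \<sigma>))"
  proof
    fix \<sigma>
    have "gprod n (map (Sig n) lams) \<sigma> = of_nat (card (Dset n lams \<sigma>)) + of_nat (card (Oset n lams \<sigma>))"
      unfolding gprod_Tcnt Tcnt_split by simp
    then show "gprod n (map (Sig n) lams) \<sigma> = Sig n (sum_list lams) \<sigma>
              + (\<Sum>\<mu> \<in> {\<mu>. parts_ge2 \<mu> \<and> psize \<mu> \<le> n}. rcf lams \<mu> n * Sig n \<mu> \<sigma>)"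
      unfolding Dset_Sig osum .
  qed
next
  fix \<mu> n
  assume a: "parts_ge2 \<mu> \<and>
        (pl \<mu> > (\<Sum>lam\<leftarrow>lams. pl lam) \<or>
         (pl \<mu> = (\<Sum>lam\<leftarrow>lams. pl lam) \<and> plen \<mu> \<ge> (\<Sum>lam\<leftarrow>lams. plen lam)))"
  interpret setting lams \<mu> using assms(2) a by unfold_locales auto
  have "Oset n lams (sig0 \<mu>) = {}" by (rule oset_empty_vanish) (use a in auto)
  then show "rcf lams \<mu> n = 0" unfolding rcf_def by simp
next
  fix \<mu> :: "nat multiset"
  assume mu: "parts_ge2 \<mu>"
  interpret setting lams \<mu> using assms(2) mu by unfold_locales auto
  define \<beta> where "\<beta> = (real (pl \<mu>) + real (\<Sum>lam\<leftarrow>lams. psize lam) + real (\<Sum>lam\<leftarrow>lams. plen lam)) / 2 - real (psize \<mu>) - 1"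
  show "(\<lambda>n. norm (rcf lams \<mu> n)) \<in> O(\<lambda>n. real n powr ((real (pl \<mu>) + real (\<Sum>lam\<leftarrow>lams. psize lam)
                               + real (\<Sum>lam\<leftarrow>lams. plen lam)) / 2 - real (psize \<mu>) - 1))"
    unfolding \<beta>_def[symmetric]
  proof (cases "YY < 2 + 2 * psize \<mu>")
    case True
    then have "\<And>n. rcf lams \<mu> n = 0" using oset_empty_small unfolding rcf_def by simp
    then show "(\<lambda>n. norm (rcf lams \<mu> n)) \<in> O(\<lambda>n. real n powr \<beta>)"
      by (intro bigoI[where c=0]) auto
  next
    case False
    define K where "K = real ((psize \<mu> + EE + 1)^PP * (EE+1))"
    have EEb: "real EE \<le> \<beta>"
    proof -
      have "2 * EE \<le> YY - 2 - 2 * psize \<mu>" unfolding EE_def by simp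
      then have "2 * real EE \<le> real YY - 2 - 2 * real (psize \<mu>)" using False by linarith
      then show ?thesis unfolding \<beta>_def YY_def PP_def NN_def by (simp add: field_simps)
    qed
    have bnd: "norm (norm (rcf lams \<mu> n)) \<le> K * norm (real n powr \<beta>)" if n: "1 \<le> n" for n
    proof -
      have c: "real (card (Oset n lams (sig0 \<mu>))) \<le> K * real n ^ EE"
        using oset_card_bound[OF n] unfolding K_def
        by (metis (no_types, lifting) mult.assoc mult.commute of_nat_le_iff of_nat_mult of_nat_power)
      have r: "norm (rcf lams \<mu> n) \<le> real (card (Oset n lams (sig0 \<mu>)))"
      proof (cases "psize \<mu> \<le> n")
        case True
        have pos: "Cnt n (sorted_list_of_multiset \<mu>) (sig0 \<mu>) \<ge> 1" using Cnt_sig0_pos[OF True] .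
        have "norm (rcf lams \<mu> n) = real (card (Oset n lams (sig0 \<mu>))) / real (Cnt n (sorted_list_of_multiset \<mu>) (sig0 \<mu>))"
          unfolding rcf_def using True mu by (simp add: norm_divide)
        also have "\<dots> \<le> real (card (Oset n lams (sig0 \<mu>)))"
        proof -
          have "real (Cnt n (sorted_list_of_multiset \<mu>) (sig0 \<mu>)) \<ge> 1" using pos by simp
          then show ?thesis by (simp add: divide_le_eq mult_le_cancel_left1 mult_left_le)
        qed
        finally show ?thesis .
      qed (simp add: rcf_def)
      have p: "real n ^ EE \<le> real n powr \<beta>"
      proof -
        have "real n ^ EE = real n powr real EE" using n by (simp add: powr_realpow)
        also have "\<dots> \<le> real n powr \<beta>" by (rule powr_mono[OF EEb]) (use n in simp)
        finally show ?thesis .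
      qed
      have K0: "K \<ge> 0" unfolding K_def by simp
      have "norm (norm (rcf lams \<mu> n)) = norm (rcf lams \<mu> n)" by simp
      also have "\<dots> \<le> K * real n ^ EE" using r c by linarith
      also have "\<dots> \<le> K * real n powr \<beta>" using p K0 by (simp add: mult_left_mono)
      also have "\<dots> = K * norm (real n powr \<beta>)" by simp
      finally show ?thesis .
    qed
    show "(\<lambda>n. norm (rcf lams \<mu> n)) \<in> O(\<lambda>n. real n powr \<beta>)"
    proof (rule bigoI)
      show "eventually (\<lambda>n. norm (norm (rcf lams \<mu> n)) \<le> K * norm (real n powr \<beta>)) at_top"
        using eventually_ge_at_top[of "1::nat"] by (rule eventually_mono) (rule bnd)
    qed
  qed
qed


end
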